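(* Let $1 < p < \infty$. Then $J_n$ is the unique Chebyshev center of $\Omega_n$ relative to the metric space $(M_n(\mathbb{R}), \|\cdot\|_{\mathcal{S}_p})$ (i.e. the unique $A\in M_n(\mathbb{R})$ minimizing $\sup_{B\in\Omega_n}\|A-B\|_{\mathcal{S}_p}$), and the corresponding Chebyshev radius is $$ \inf_{A\in M_n(\mathbb{R})}\sup_{B\in\Omega_n}\|A-B\|_{\mathcal{S}_p} = (n-1)^{1/p}. $$
   Context: $\Omega_n$ denotes the set of $n\times n$ doubly stochastic matrices (nonnegative real entries, all row and column sums equal to $1$). $J_n$ is the $n\times n$ matrix with all entries equal to $1/n$. For $p\ge1$, $\|A\|_{\mathcal{S}_p} := \big(\sum_{i=1}^n\sigma_i(A)^p\big)^{1/p}$ where $\sigma_i(A)$ are the singular values of $A$. Given a constraint set $\mathcal{R}\subseteq M_n(\mathbb{R})$ and a norm, the Chebyshev radius of $\Omega_n$ is $\inf_{A\in\mathcal{R}}\sup_{B\in\Omega_n}\|A-B\|$ and a Chebyshev center is any $A\in\mathcal{R}$ attaining this infimum; "relative to the metric space $(M_n(\mathbb{R}),\|\cdot\|)$" means $\mathcal{R}=M_n(\mathbb{R})$. *)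

theory Defs
  imports "HOL-Analysis.Analysis"
begin

definition doubly_stochastic :: "(real^'n^'n) set" where
  "doubly_stochastic = {B. (\<forall>i j. B $ i $ j \<ge> 0) \<and>
      (\<forall>i. (\<Sum>j\<in>UNIV. B $ i $ j) = 1) \<and> (\<forall>j. (\<Sum>i\<in>UNIV. B $ i $ j) = 1)}"

definition Jmat :: "real^'n^'n" where
  "Jmat = (\<chi> i j. 1 / real CARD('n))"

definition diag_mat :: "('n \<Rightarrow> real) \<Rightarrow> real^'n^'n" where
  "diag_mat s = (\<chi> i j. if i = j then s i else 0)"

definition singular_values :: "real^'n^'n \<Rightarrow> ('n \<Rightarrow> real)" where
  "singular_values A = (SOME s. (\<forall>i. s i \<ge> 0) \<and>
      (\<exists>U V. orthogonal_matrix U \<and> orthogonal_matrix V \<and>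
             A = U ** diag_mat s ** transpose V))"

definition schatten_norm :: "real \<Rightarrow> real^'n^'n \<Rightarrow> real" where
  "schatten_norm p A = (\<Sum>i\<in>UNIV. singular_values A i powr p) powr (1 / p)"

end

theory Submission
  imports Defs
begin


definition mcols :: "('n \<Rightarrow> real^'n) \<Rightarrow> real^'n^'n" where
  "mcols f = (\<chi> i j. f j $ i)"

lemma column_mcols[simp]: "column j (mcols f) = f j"
  by (simp add: mcols_def column_def vec_eq_iff)

lemma tmul_entry:
  fixes U M W :: "real^'n^'n"
  shows "(transpose U ** M ** W) $ i $ j = column i U \<bullet> (M *v column j W)"
proof -
  have "(transpose U ** M ** W) $ i $ j = (\<Sum>k\<in>UNIV. (\<Sum>l\<in>UNIV. U$l$i * M$l$k) * W$k$j)"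
    by (simp add: matrix_matrix_mult_def transpose_def)
  also have "\<dots> = (\<Sum>k\<in>UNIV. \<Sum>l\<in>UNIV. U$l$i * M$l$k * W$k$j)"
    by (simp add: sum_distrib_right)
  also have "\<dots> = (\<Sum>l\<in>UNIV. \<Sum>k\<in>UNIV. U$l$i * M$l$k * W$k$j)"
    by (rule sum.swap)
  also have "\<dots> = column i U \<bullet> (M *v column j W)"
    by (simp add: inner_vec_def column_def matrix_vector_mult_def sum_distrib_left mult.assoc)
  finally show ?thesis .
qed

lemma orth_mcols:
  "orthogonal_matrix (mcols f :: real^'n^'n) \<longleftrightarrow>
     (\<forall>i. norm (f i) = 1) \<and> (\<forall>i j. i \<noteq> j \<longrightarrow> f i \<bullet> f j = 0)"
  by (simp add: orthogonal_matrix_orthonormal_columns orthogonal_def)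

lemma axis_mat_axis: "axis k 1 \<bullet> (B *v axis l 1) = (B :: real^'n^'n) $ k $ l"
  by (simp add: inner_axis') (simp add: matrix_vector_mult_def axis_def if_distrib cong: if_cong)

lemma comp_cont: "continuous_on UNIV (\<lambda>U::real^'n^'n. (\<Sum>k\<in>UNIV. U$k$i * U$k$j))"
  by (intro continuous_intros)


lemma frob2:
  assumes "p1^2+q1^2 = (1::real)" "p2^2+q2^2 = 1"
  shows "(p1 * p2 * a + p1 * q2 * b + q1 * p2 * c + q1 * q2 * d)^2 + (-p1 * q2 * a + p1 * p2 * b - q1 * q2 * c + q1 * p2 * d)^2
    + (-q1 * p2 * a - q1 * q2 * b + p1 * p2 * c + p1 * q2 * d)^2 + (q1 * q2 * a - q1 * p2 * b - p1 * q2 * c + p1 * p2 * d)^2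
    = a^2+b^2+c^2+d^2"
proof -
  have "(p1 * p2 * a + p1 * q2 * b + q1 * p2 * c + q1 * q2 * d)^2 + (-p1 * q2 * a + p1 * p2 * b - q1 * q2 * c + q1 * p2 * d)^2
    + (-q1 * p2 * a - q1 * q2 * b + p1 * p2 * c + p1 * q2 * d)^2 + (q1 * q2 * a - q1 * p2 * b - p1 * q2 * c + p1 * p2 * d)^2
    = (p1^2+q1^2) * (p2^2+q2^2) * (a^2+b^2+c^2+d^2)" by algebra
  then show ?thesis using assms by simp
qed

lemma step2:
  fixes a m d :: real
  shows "\<exists>c s. c^2+s^2 = 1 \<and> c * s * (d-a) + (c^2-s^2) * m = 0"
proof -
  let ?f = "\<lambda>t. cos t  *  sin t  *  (d-a) + ((cos t)^2 - (sin t)^2) * m"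
  have cont: "\<forall>x. 0 \<le> x \<and> x \<le> pi/2 \<longrightarrow> isCont ?f x"
    by (intro allI impI continuous_intros)
  have f0: "?f 0 = m" and f1: "?f (pi/2) = -m" by simp_all
  have "\<exists>t. 0 \<le> t \<and> t \<le> pi/2 \<and> ?f t = 0"
  proof (cases "m \<ge> 0")
    case True
    then show ?thesis using IVT2[of ?f "pi/2" 0 0] cont f0 f1 by auto
  next
    case False
    then show ?thesis using IVT[of ?f 0 0 "pi/2"] cont f0 f1 by auto
  qed
  then obtain t where "?f t = 0" by blast
  then show ?thesis by (intro exI[of _ "cos t"] exI[of _ "sin t"]) simp
qed

lemma step1:
  fixes a b c d :: real
  shows "\<exists>x y. x^2+y^2 = 1 \<and> x * (b-c) + y * (a+d) = 0"
proof (cases "(a+d)^2 + (c-b)^2 = 0")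
  case True
  then show ?thesis by (intro exI[of _ 1] exI[of _ 0]) (simp add: sum_power2_eq_zero_iff)
next
  case False
  define r where "r = sqrt ((a+d)^2 + (c-b)^2)"
  have r0: "r > 0" using False r_def
    by (metis add_nonneg_nonneg real_sqrt_gt_zero zero_le_power2 order_le_less)
  have rr: "r^2 = (a+d)^2 + (c-b)^2" unfolding r_def by simp
  show ?thesis
  proof (intro exI conjI)
    show "((a+d)/r)^2 + ((c-b)/r)^2 = 1"
    proof -
      have "((a+d)/r)^2 + ((c-b)/r)^2 = ((a+d)^2+(c-b)^2)/r^2"
        by (metis power_divide add_divide_distrib)
      moreover have "r^2 \<noteq> 0" using r0 by simp
      ultimately show ?thesis using rr by (metis divide_self)
    qed
    show "(a+d)/r * (b-c) + (c-b)/r * (a+d) = 0"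
      by (simp add: divide_simps algebra_simps)
  qed
qed

lemma two_by_two:
  fixes a b c d :: real
  shows "\<exists>p1 q1 p2 q2. p1^2+q1^2 = 1 \<and> p2^2+q2^2 = 1 \<and>
    -p1 * q2 * a + p1 * p2 * b - q1 * q2 * c + q1 * p2 * d = 0 \<and> -q1 * p2 * a - q1 * q2 * b + p1 * p2 * c + p1 * q2 * d = 0"
proof -
  obtain x y where xy: "x^2+y^2 = 1" "x * (b-c) + y * (a+d) = 0" using step1 by blast
  obtain co si where cs: "co^2+si^2 = 1"
    "co *  si * ((-y * b+x * d)-(x * a+y * c)) + (co^2-si^2) * (x * b+y * d) = 0"
    using step2 by blast
  show ?thesis
  proof (intro exI conjI)
    show "(x * co - y *  si)^2 + (y * co + x *  si)^2 = 1"
    proof -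
      have "(x * co - y *  si)^2 + (y * co + x *  si)^2 = (x^2+y^2) * (co^2+si^2)" by algebra
      then show ?thesis using xy cs by simp
    qed
    show "co^2+si^2 = 1" by fact
    show "-(x * co - y *  si) *  si * a + (x * co - y *  si) * co * b - (y * co + x *  si) *  si * c + (y * co + x *  si) * co * d = 0"
      using xy cs by algebra
    show "-(y * co + x *  si) * co * a - (y * co + x *  si) *  si * b + (x * co - y *  si) * co * c + (x * co - y *  si) *  si * d = 0"
      using xy cs by algebra
  qed
qed


lemma mv_add: "(A::real^'n^'m) *v (x + y) = A *v x + A *v y"
  by (simp add: matrix_vector_mult_def vec_eq_iff sum.distrib algebra_simps)
lemma mv_scale: "(A::real^'n^'m) *v (c *\<^sub>R x) = c *\<^sub>R (A *v x)"
  by (simp add: matrix_vector_mult_def vec_eq_iff sum_distrib_left algebra_simps)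
lemma mv_diff: "(A::real^'n^'m) *v (x - y) = A *v x - A *v y"
  by (simp add: matrix_vector_mult_def vec_eq_iff sum_subtractf algebra_simps)
lemma mv_minus: "(A::real^'n^'m) *v (- x) = - (A *v x)"
  by (simp add: matrix_vector_mult_def vec_eq_iff sum_negf algebra_simps)
lemma mdiff_v: "((A::real^'n^'m) - B) *v x = A *v x - B *v x"
  by (simp add: matrix_vector_mult_def vec_eq_iff sum_subtractf algebra_simps)

definition rot :: "'n \<Rightarrow> 'n \<Rightarrow> real \<Rightarrow> real \<Rightarrow> real^'n^'n" where
  "rot i j c s = mcols (\<lambda>k. if k = i then c *\<^sub>R axis i 1 + s *\<^sub>R axis j 1
      else if k = j then (-s) *\<^sub>R axis i 1 + c *\<^sub>R axis j 1 else axis k 1)"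

lemma bil2:
  fixes B :: "real^'n^'n"
  shows "(x *\<^sub>R axis a 1 + y *\<^sub>R axis b 1) \<bullet> (B *v (z *\<^sub>R axis c 1 + w *\<^sub>R axis d 1))
    = x*z*(B$a$c) + x*w*(B$a$d) + y*z*(B$b$c) + y*w*(B$b$d)"
  by (simp only: mv_add mv_scale inner_add_left inner_add_right inner_scaleR_left
      inner_scaleR_right axis_mat_axis) (simp add: algebra_simps)

lemma rot_col:
  "column k (rot i j c s) = (if k = i then c *\<^sub>R axis i 1 + s *\<^sub>R axis j 1
      else if k = j then (-s) *\<^sub>R axis i 1 + c *\<^sub>R axis j 1 else axis k 1)"
  unfolding rot_def by simp

lemma rot_ci: "column i (rot i j c s) = c *\<^sub>R axis i 1 + s *\<^sub>R axis j 1"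
  by (simp add: rot_col)
lemma rot_cj: "i \<noteq> j \<Longrightarrow> column j (rot i j c s) = (-s) *\<^sub>R axis i 1 + c *\<^sub>R axis j 1"
  by (simp add: rot_col)
lemma rot_ck: "k \<noteq> i \<Longrightarrow> k \<noteq> j \<Longrightarrow> column k (rot i j c s) = axis k 1"
  by (simp add: rot_col)


lemma rot_orth:
  fixes i j :: "'n::finite"
  assumes ij: "i \<noteq> j" and cs: "c^2 + s^2 = 1"
  shows "orthogonal_matrix (rot i j c s)"
proof -
  have n1: "norm (x *\<^sub>R axis i 1 + y *\<^sub>R axis j (1::real)) = 1" if "x^2+y^2 = 1" for x y
    using that ij by (simp add: norm_eq_1 inner_add_left inner_add_right inner_axis_axis power2_eq_square)
  have o1: "(x *\<^sub>R axis i 1 + y *\<^sub>R axis j (1::real)) \<bullet> (z *\<^sub>R axis i 1 + w *\<^sub>R axis j 1)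
      = x*z + y*w" for x y z w
    using ij by (simp add: inner_add_left inner_add_right inner_axis_axis)
  have o2: "(x *\<^sub>R axis i 1 + y *\<^sub>R axis j (1::real)) \<bullet> axis k 1 = 0" if "k \<noteq> i" "k \<noteq> j" for x y k
    using that by (simp add: inner_add_left inner_axis_axis)
  show ?thesis
    unfolding orthogonal_matrix_orthonormal_columns orthogonal_def
  proof (intro conjI allI impI)
    fix k :: "'n::finite"
    show "norm (column k (rot i j c s)) = 1"
      using n1[of c s] n1[of "-s" c] cs
      by (cases "k = i"; cases "k = j") (simp_all add: rot_ci rot_cj rot_ck ij add.commute)
  next
    fix k l :: "'n::finite" assume kl: "k \<noteq> l"
    show "column k (rot i j c s) \<bullet> column l (rot i j c s) = 0"
      using kl ij
      by (cases "k = i"; cases "k = j"; cases "l = i"; cases "l = j")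
         (simp_all add: rot_ci rot_cj rot_ck inner_add_left inner_add_right inner_diff_left
           inner_diff_right inner_axis_axis)
  qed
qed

lemma rot_kk:
  fixes B :: "real^'n^'n"
  shows "k \<noteq> i \<Longrightarrow> k \<noteq> j \<Longrightarrow> (transpose (rot i j p1 q1) ** B ** rot i j p2 q2) $ k $ k = B $ k $ k"
  by (simp only: tmul_entry rot_ck axis_mat_axis not_False_eq_True)

lemma rot_ii:
  fixes B :: "real^'n^'n"
  shows "(transpose (rot i j p1 q1) ** B ** rot i j p2 q2) $ i $ i = p1 * p2 * (B$i$i) + p1 * q2 * (B$i$j) + q1 * p2 * (B$j$i) + q1 * q2 * (B$j$j)"
  by (simp only: tmul_entry rot_ci bil2 not_False_eq_True)

lemma rot_ij:
  fixes B :: "real^'n^'n"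
  shows "i \<noteq> j \<Longrightarrow> (transpose (rot i j p1 q1) ** B ** rot i j p2 q2) $ i $ j = -p1 * q2 * (B$i$i) + p1 * p2 * (B$i$j) - q1 * q2 * (B$j$i) + q1 * p2 * (B$j$j)"
  by (simp only: tmul_entry rot_ci rot_cj bil2 not_False_eq_True)

lemma rot_ji:
  fixes B :: "real^'n^'n"
  shows "i \<noteq> j \<Longrightarrow> (transpose (rot i j p1 q1) ** B ** rot i j p2 q2) $ j $ i = -q1 * p2 * (B$i$i) - q1 * q2 * (B$i$j) + p1 * p2 * (B$j$i) + p1 * q2 * (B$j$j)"
  by (simp only: tmul_entry rot_ci rot_cj bil2 not_False_eq_True)

lemma rot_jj:
  fixes B :: "real^'n^'n"
  shows "i \<noteq> j \<Longrightarrow> (transpose (rot i j p1 q1) ** B ** rot i j p2 q2) $ j $ j = q1 * q2 * (B$i$i) - q1 * p2 * (B$i$j) - p1 * q2 * (B$j$i) + p1 * p2 * (B$j$j)"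
  by (simp only: tmul_entry rot_ci rot_cj bil2 not_False_eq_True)


lemma tAV_entry:
  fixes U V :: "real^'n^'n"
  shows "(transpose U ** (A::real^'n^'n) ** V) $ i $ j = (\<Sum>k\<in>UNIV. \<Sum>l\<in>UNIV. U$k$i * A$k$l * V$l$j)"
  by (simp add: tmul_entry inner_vec_def column_def matrix_vector_mult_def sum_distrib_left mult.assoc)

lemma orth_set_eq: "{U :: real^'n^'n. orthogonal_matrix U} =
   {U. \<forall>i j. (\<Sum>k\<in>UNIV. U$k$i * U$k$j) = (if i = j then 1 else 0)}"
  by (auto simp: orthogonal_matrix matrix_matrix_mult_def transpose_def mat_def vec_eq_iff)

lemma compact_orth: "compact {U :: real^'n^'n. orthogonal_matrix U}"
proof (rule compact_eq_bounded_closed[THEN iffD2], rule conjI)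
  show "bounded {U :: real^'n^'n. orthogonal_matrix U}"
  proof (rule boundedI)
    fix U :: "real^'n^'n" assume "U \<in> {U. orthogonal_matrix U}"
    then have r: "norm (U $ i) = 1" for i
      by (metis mem_Collect_eq orthogonal_matrix_orthonormal_rows row_def vec_lambda_eta)
    have "norm U \<le> (\<Sum>i\<in>UNIV. norm (U $ i))"
      unfolding norm_vec_def by (rule L2_set_le_sum) auto
    also have "\<dots> = real CARD('n)" by (simp add: r)
    finally show "norm U \<le> real CARD('n)" .
  qed
  show "closed {U :: real^'n^'n. orthogonal_matrix U}"
    unfolding orth_set_eq
    by (intro closed_Collect_all closed_Collect_eq continuous_intros)
qed

definition FF :: "real^'n^'n \<Rightarrow> ((real^'n^'n) \<times> (real^'n^'n)) \<Rightarrow> real" where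
  "FF A z = (\<Sum>i\<in>UNIV. ((transpose (fst z) ** A ** snd z) $ i $ i)^2)"

lemma FF_cont: "continuous_on S (FF A)"
  unfolding FF_def tAV_entry by (intro continuous_intros)

lemma sum_two:
  assumes "i \<noteq> j"
  shows "(\<Sum>k\<in>(UNIV::'n::finite set). f k) = f i + f j + (\<Sum>k\<in>UNIV-{i,j}. f k)"
proof -
  have "(\<Sum>k\<in>(UNIV::'n set). f k) = f i + (\<Sum>k\<in>UNIV-{i}. f k)"
    by (simp add: sum.remove)
  also have "(\<Sum>k\<in>UNIV-{i}. f k) = f j + (\<Sum>k\<in>UNIV-{i}-{j}. f k)"
    using assms by (intro sum.remove) auto
  also have "UNIV-{i}-{j} = UNIV - {i,j}" by auto
  finally show ?thesis by (simp add: add.assoc)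
qed

lemma diag_mul: "diag_mat a ** diag_mat b = (diag_mat (\<lambda>k. a k * b k) :: real^'n^'n)"
  by (simp add: diag_mat_def matrix_matrix_mult_def vec_eq_iff if_distrib[of "\<lambda>x. x * _"]
      cong: if_cong)

lemma diag_transpose: "transpose (diag_mat a) = (diag_mat a :: real^'n^'n)"
  by (simp add: diag_mat_def transpose_def vec_eq_iff)

lemma diag_one: "diag_mat (\<lambda>k. 1) = (mat 1 :: real^'n^'n)"
  by (simp add: diag_mat_def mat_def vec_eq_iff)

lemma improve:
  fixes A U V :: "real^'n^'n"
  assumes U: "orthogonal_matrix U" and V: "orthogonal_matrix V" and ij: "i \<noteq> j"
    and nz: "(transpose U ** A ** V) $ i $ j \<noteq> 0 \<or> (transpose U ** A ** V) $ j $ i \<noteq> 0"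
  shows "\<exists>U' V'. orthogonal_matrix U' \<and> orthogonal_matrix V' \<and> FF A (U,V) < FF A (U',V')"
proof -
  define B where "B = transpose U ** A ** V"
  obtain p1 q1 p2 q2 where pq: "p1^2+q1^2 = 1" "p2^2+q2^2 = 1"
    "-p1 * q2 * (B$i$i) + p1 * p2 * (B$i$j) - q1 * q2 * (B$j$i) + q1 * p2 * (B$j$j) = 0"
    "-q1 * p2 * (B$i$i) - q1 * q2 * (B$i$j) + p1 * p2 * (B$j$i) + p1 * q2 * (B$j$j) = 0"
    using two_by_two by blast
  define U' where "U' = U ** rot i j p1 q1"
  define V' where "V' = V ** rot i j p2 q2"
  have oU': "orthogonal_matrix U'" unfolding U'_def
    using U rot_orth[OF ij pq(1)] by (rule orthogonal_matrix_mul)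
  have oV': "orthogonal_matrix V'" unfolding V'_def
    using V rot_orth[OF ij pq(2)] by (rule orthogonal_matrix_mul)
  define T where "T = transpose (rot i j p1 q1) ** B ** rot i j p2 q2"
  have TT: "transpose U' ** A ** V' = T"
    by (simp add: T_def B_def U'_def V'_def matrix_transpose_mul matrix_mul_assoc)
  have Tk: "T $ k $ k = B $ k $ k" if "k \<noteq> i" "k \<noteq> j" for k
    unfolding T_def using that by (rule rot_kk)
  have Tii: "T $ i $ i = p1 * p2 * (B$i$i) + p1 * q2 * (B$i$j) + q1 * p2 * (B$j$i) + q1 * q2 * (B$j$j)"
    unfolding T_def by (rule rot_ii)
  have Tjj: "T $ j $ j = q1 * q2 * (B$i$i) - q1 * p2 * (B$i$j) - p1 * q2 * (B$j$i) + p1 * p2 * (B$j$j)"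
    unfolding T_def using ij by (rule rot_jj)
  have fr: "(T$i$i)^2 + (T$j$j)^2 = (B$i$i)^2 + (B$i$j)^2 + (B$j$i)^2 + (B$j$j)^2"
    using frob2[OF pq(1,2), of "B$i$i" "B$i$j" "B$j$i" "B$j$j"] pq(3,4) unfolding Tii Tjj
    by simp
  have pos: "(B$i$j)^2 + (B$j$i)^2 > 0" using nz unfolding B_def
    by (simp add: sum_power2_gt_zero_iff)
  have "FF A (U,V) = (B$i$i)^2 + (B$j$j)^2 + (\<Sum>k\<in>UNIV-{i,j}. (B$k$k)^2)"
    unfolding FF_def B_def by (simp add: sum_two[OF ij])
  also have "\<dots> < (T$i$i)^2 + (T$j$j)^2 + (\<Sum>k\<in>UNIV-{i,j}. (T$k$k)^2)"
    using fr pos Tk by simp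
  also have "\<dots> = FF A (U',V')"
    unfolding FF_def using TT by (simp add: sum_two[OF ij])
  finally show ?thesis using oU' oV' by blast
qed

lemma svd_exists:
  fixes A :: "real^'n^'n"
  shows "\<exists>s U V. (\<forall>i. s i \<ge> 0) \<and> orthogonal_matrix U \<and> orthogonal_matrix V \<and>
             A = U ** diag_mat s ** transpose V"
proof -
  let ?O = "{U :: real^'n^'n. orthogonal_matrix U}"
  have "compact (?O \<times> ?O)" by (intro compact_Times compact_orth)
  moreover have "?O \<times> ?O \<noteq> {}" using orthogonal_matrix_id by blast
  ultimately obtain z where z: "z \<in> ?O \<times> ?O" and zmax: "\<And>y. y \<in> ?O \<times> ?O \<Longrightarrow> FF A y \<le> FF A z"
    using continuous_attains_sup[OF _ _ FF_cont] by metis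
  obtain U V where zUV: "z = (U,V)" by (cases z)
  have U: "orthogonal_matrix U" and V: "orthogonal_matrix V" using z zUV by auto
  define B where "B = transpose U ** A ** V"
  have diag: "B $ i $ j = 0" if ij: "i \<noteq> j" for i j
  proof (rule ccontr)
    assume "B $ i $ j \<noteq> 0"
    then obtain U' V' where "orthogonal_matrix U'" "orthogonal_matrix V'" "FF A (U,V) < FF A (U',V')"
      using improve[OF U V ij, of A] unfolding B_def by blast
    then show False using zmax[of "(U',V')"] zUV by auto
  qed
  define b where "b k = B $ k $ k" for k
  have Bd: "B = diag_mat b"
    using diag by (auto simp: diag_mat_def b_def vec_eq_iff)
  have AUBV: "A = U ** B ** transpose V"
  proof -
    have "U ** B ** transpose V = (U ** transpose U) ** A ** (V ** transpose V)"
      by (simp add: B_def matrix_mul_assoc)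
    also have "\<dots> = A" using U V by (simp add: orthogonal_matrix_def)
    finally show ?thesis by simp
  qed
  define sg where "sg k = (if b k < 0 then -1 else (1::real))" for k
  define s where "s k = \<bar>b k\<bar>" for k
  have bsg: "diag_mat b = diag_mat sg ** diag_mat s"
    unfolding diag_mul by (rule arg_cong[where f=diag_mat]) (auto simp: sg_def s_def)
  have osg: "orthogonal_matrix (diag_mat sg :: real^'n^'n)"
    unfolding orthogonal_matrix diag_transpose diag_mul
    by (subst diag_one[symmetric], rule arg_cong[where f=diag_mat]) (auto simp: sg_def)
  show ?thesis
  proof (intro exI conjI)
    show "\<forall>i. s i \<ge> 0" by (simp add: s_def)
    show "orthogonal_matrix (U ** diag_mat sg)" using U osg by (rule orthogonal_matrix_mul)
    show "orthogonal_matrix V" by fact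
    show "A = U ** diag_mat sg ** diag_mat s ** transpose V"
    proof -
      have "A = U ** (diag_mat sg ** diag_mat s) ** transpose V"
        by (subst AUBV) (simp only: Bd bsg)
      then show ?thesis by (simp only: matrix_mul_assoc)
    qed
  qed
qed


lemma sv_spec:
  fixes A :: "real^'n^'n"
  shows "(\<forall>i. singular_values A i \<ge> 0) \<and> (\<exists>U V. orthogonal_matrix U \<and> orthogonal_matrix V \<and>
      A = U ** diag_mat (singular_values A) ** transpose V)"
proof -
  have ex: "\<exists>s. (\<forall>i. s i \<ge> 0) \<and> (\<exists>U V. orthogonal_matrix U \<and> orthogonal_matrix V \<and>
      A = U ** diag_mat s ** transpose V)" using svd_exists[of A] by blast
  show ?thesis unfolding singular_values_def by (rule someI_ex[OF ex])
qed

lemma convex_powr0: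
  assumes p: "p \<ge> 1"
  shows "convex_on {0..} (\<lambda>x::real. x powr p)"
  unfolding convex_on_def
proof (intro conjI ballI allI impI)
  show "convex {0::real..}" by simp
  fix x y u v :: real assume x: "x \<in> {0..}" and y: "y \<in> {0..}" and uv: "0 \<le> u" "0 \<le> v" "u + v = 1"
  have aux: "(v * y) powr p \<le> v * y powr p" if "0 \<le> v" "v \<le> 1" "0 \<le> y" for v y :: real
  proof -
    have "(v * y) powr p = v powr p * y powr p" using that by (simp add: powr_mult)
    also have "v powr p \<le> v powr 1" using that p by (intro powr_mono') auto
    then have "v powr p * y powr p \<le> v * y powr p" using that by (intro mult_right_mono) auto
    finally show ?thesis .
  qed
  show "(u *\<^sub>R x + v *\<^sub>R y) powr p \<le> u * x powr p + v * y powr p"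
  proof (cases "x = 0 \<or> y = 0")
    case True
    then show ?thesis
    proof
      assume "x = 0" then show ?thesis using aux[of v y] uv y p by simp
    next
      assume "y = 0" then show ?thesis using aux[of u x] uv x p by simp
    qed
  next
    case False
    then have xy: "x \<in> {0<..}" "y \<in> {0<..}" using x y by auto
    have u: "u = 1 - v" using uv by simp
    have "v \<le> 1" using uv by simp
    then show ?thesis using convex_onD[OF powr_convex[OF p], of v x y] xy uv(2) unfolding u by simp
  qed
qed

lemma jensen_sub:
  fixes m s :: "'a \<Rightarrow> real"
  assumes I: "finite I" and m: "\<And>k. k \<in> I \<Longrightarrow> m k \<ge> 0" and M: "(\<Sum>k\<in>I. m k) \<le> 1"
    and s: "\<And>k. k \<in> I \<Longrightarrow> s k \<ge> 0" and p: "p \<ge> 1"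
  shows "(\<Sum>k\<in>I. m k * s k) powr p \<le> (\<Sum>k\<in>I. m k * s k powr p)"
proof (cases "(\<Sum>k\<in>I. m k) = 0")
  case True
  then have "\<forall>k\<in>I. m k = 0" using sum_nonneg_eq_0_iff[OF I] m by blast
  then show ?thesis by simp
next
  case False
  define M where "M = (\<Sum>k\<in>I. m k)"
  have M0: "M > 0" using False m M_def by (metis order_le_less sum_nonneg)
  have Ine: "I \<noteq> {}" using False by auto
  have "(\<lambda>x. x powr p) (\<Sum>k\<in>I. (m k / M) *\<^sub>R s k) \<le> (\<Sum>k\<in>I. (m k / M) * (\<lambda>x. x powr p) (s k))"
    using M0 m s by (intro convex_on_sum[OF I Ine convex_powr0[OF p]])
      (auto simp: M_def sum_divide_distrib[symmetric])
  then have j: "(\<Sum>k\<in>I. m k * s k / M) powr p \<le> (\<Sum>k\<in>I. m k * s k powr p) / M"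
    by (simp add: sum_divide_distrib)
  have "(\<Sum>k\<in>I. m k * s k) powr p = (M * ((\<Sum>k\<in>I. m k * s k) / M)) powr p"
    using M0 by simp
  also have "\<dots> = M powr p * ((\<Sum>k\<in>I. m k * s k / M) powr p)"
    using M0 m s by (subst powr_mult) (auto simp: sum_divide_distrib intro!: sum_nonneg divide_nonneg_nonneg)
  also have "\<dots> \<le> M powr p * ((\<Sum>k\<in>I. m k * s k powr p) / M)"
    using j by (intro mult_left_mono) auto
  also have "\<dots> = M powr (p - 1) * (\<Sum>k\<in>I. m k * s k powr p)"
    using M0 by (simp add: powr_diff field_simps)
  also have "\<dots> \<le> 1 * (\<Sum>k\<in>I. m k * s k powr p)"
  proof (rule mult_right_mono)
    show "M powr (p - 1) \<le> 1" using M0 M p unfolding M_def[symmetric] by (intro powr_le1) auto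
    show "0 \<le> (\<Sum>k\<in>I. m k * s k powr p)" using m by (intro sum_nonneg) auto
  qed
  finally show ?thesis by simp
qed

lemma orth_col_sq:
  fixes Q :: "real^'n^'n"
  assumes "orthogonal_matrix Q"
  shows "(\<Sum>k\<in>UNIV. (Q$k$i)^2) = 1"
proof -
  have "(transpose Q ** Q) $ i $ i = 1" using assms by (simp add: orthogonal_matrix_def mat_def)
  then show ?thesis by (simp add: matrix_matrix_mult_def transpose_def power2_eq_square)
qed

lemma orth_row_sq:
  fixes Q :: "real^'n^'n"
  assumes "orthogonal_matrix Q"
  shows "(\<Sum>k\<in>UNIV. (Q$i$k)^2) = 1"
proof -
  have "(Q ** transpose Q) $ i $ i = 1" using assms by (simp add: orthogonal_matrix_def mat_def)
  then show ?thesis by (simp add: matrix_matrix_mult_def transpose_def power2_eq_square)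
qed

lemma abs_mul_le: "\<bar>a\<bar> * \<bar>b\<bar> \<le> (a^2 + b^2) / (2::real)"
proof -
  have "0 \<le> (\<bar>a\<bar> - \<bar>b\<bar>)^2" by simp
  then show ?thesis by (simp add: power2_eq_square algebra_simps)
qed

lemma sum_abs_mul_le:
  fixes a b :: "'a \<Rightarrow> real"
  assumes "finite I" "(\<Sum>k\<in>I. (a k)^2) = 1" "(\<Sum>k\<in>I. (b k)^2) = 1"
  shows "(\<Sum>k\<in>I. \<bar>a k\<bar> * \<bar>b k\<bar>) \<le> 1"
proof -
  have "(\<Sum>k\<in>I. \<bar>a k\<bar> * \<bar>b k\<bar>) \<le> (\<Sum>k\<in>I. ((a k)^2 + (b k)^2) / 2)"
    by (intro sum_mono abs_mul_le)
  also have "\<dots> = 1" using assms by (simp add: sum_divide_distrib[symmetric] sum.distrib)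
  finally show ?thesis .
qed

lemma diag_bound:
  fixes O1 O2 :: "real^'n^'n"
  assumes p: "p \<ge> 1" and s: "\<forall>k. s k \<ge> 0" and O1: "orthogonal_matrix O1" and O2: "orthogonal_matrix O2"
  shows "(\<Sum>i\<in>UNIV. \<bar>(O1 ** diag_mat s ** O2)$i$i\<bar> powr p) \<le> (\<Sum>k\<in>UNIV. s k powr p)"
proof -
  define m where "m i k = \<bar>O1$i$k\<bar> * \<bar>O2$k$i\<bar>" for i k
  have ent: "(O1 ** diag_mat s ** O2)$i$j = (\<Sum>k\<in>UNIV. O1$i$k * s k * O2$k$j)" for i j
  proof -
    have d: "(O1 ** diag_mat s)$i$k = O1$i$k * s k" for k
    proof -
      have "(O1 ** diag_mat s)$i$k = (\<Sum>l\<in>UNIV. O1$i$l * (if l = k then s l else 0))"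
        by (simp add: matrix_matrix_mult_def diag_mat_def)
      also have "\<dots> = (\<Sum>l\<in>UNIV. if l = k then O1$i$l * s l else 0)"
        by (rule sum.cong) auto
      finally show ?thesis by simp
    qed
    show ?thesis unfolding matrix_matrix_mult_def[of "O1 ** diag_mat s" O2] by (simp add: d)
  qed
  have m0: "m i k \<ge> 0" for i k by (simp add: m_def)
  have mrow: "(\<Sum>k\<in>UNIV. m i k) \<le> 1" for i
    unfolding m_def by (rule sum_abs_mul_le) (simp_all add: orth_row_sq[OF O1] orth_col_sq[OF O2])
  have mcol: "(\<Sum>i\<in>UNIV. m i k) \<le> 1" for k
    unfolding m_def by (rule sum_abs_mul_le) (simp_all add: orth_col_sq[OF O1] orth_row_sq[OF O2])
  have "(\<Sum>i\<in>UNIV. \<bar>(O1 ** diag_mat s ** O2)$i$i\<bar> powr p) \<le> (\<Sum>i\<in>UNIV. (\<Sum>k\<in>UNIV. m i k * s k) powr p)"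
  proof (rule sum_mono)
    fix i
    have "\<bar>(O1 ** diag_mat s ** O2)$i$i\<bar> \<le> (\<Sum>k\<in>UNIV. \<bar>O1$i$k * s k * O2$k$i\<bar>)"
      unfolding ent by (rule sum_abs)
    also have "\<dots> = (\<Sum>k\<in>UNIV. m i k * s k)"
      using s by (intro sum.cong) (auto simp: m_def abs_mult)
    finally show "\<bar>(O1 ** diag_mat s ** O2)$i$i\<bar> powr p \<le> (\<Sum>k\<in>UNIV. m i k * s k) powr p"
      using p by (intro powr_mono2) auto
  qed
  also have "\<dots> \<le> (\<Sum>i\<in>UNIV. \<Sum>k\<in>UNIV. m i k * s k powr p)"
    using m0 mrow s p by (intro sum_mono jensen_sub) auto
  also have "\<dots> = (\<Sum>k\<in>UNIV. s k powr p * (\<Sum>i\<in>UNIV. m i k))"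
    by (subst sum.swap) (simp add: sum_distrib_left mult.commute)
  also have "\<dots> \<le> (\<Sum>k\<in>UNIV. s k powr p * 1)"
    using mcol by (intro sum_mono mult_left_mono) auto
  finally show ?thesis by simp
qed

lemma lower_C:
  fixes X U W :: "real^'n^'n"
  assumes p: "p \<ge> 1" and U: "orthogonal_matrix U" and W: "orthogonal_matrix W"
  shows "(\<Sum>i\<in>UNIV. \<bar>(transpose U ** X ** W)$i$i\<bar> powr p) \<le> (\<Sum>k\<in>UNIV. singular_values X k powr p)"
proof -
  obtain U0 V0 where U0: "orthogonal_matrix U0" and V0: "orthogonal_matrix V0"
    and X: "X = U0 ** diag_mat (singular_values X) ** transpose V0"
    using sv_spec by blast
  have e: "transpose U ** X ** W = (transpose U ** U0) ** diag_mat (singular_values X) ** (transpose V0 ** W)"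
    by (subst X) (simp add: matrix_mul_assoc)
  have o1: "orthogonal_matrix (transpose U ** U0)" and o2: "orthogonal_matrix (transpose V0 ** W)"
    using U U0 V0 W by (simp_all add: orthogonal_matrix_mul)
  have s0: "\<forall>k. singular_values X k \<ge> 0" using sv_spec[of X] by blast
  show ?thesis unfolding e by (rule diag_bound[OF p s0 o1 o2])
qed


lemma mv_col: "((M::real^'n^'n) *v column k N) $ i = (M ** N) $ i $ k"
  by (simp add: matrix_vector_mult_def column_def matrix_matrix_mult_def)

lemma diag_right: "((M::real^'n^'n) ** diag_mat s) $ i $ k = M$i$k * s k"
proof -
  have "(M ** diag_mat s)$i$k = (\<Sum>l\<in>UNIV. M$i$l * (if l = k then s l else 0))"
    by (simp add: matrix_matrix_mult_def diag_mat_def)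
  also have "\<dots> = (\<Sum>l\<in>UNIV. if l = k then M$i$l * s l else 0)"
    by (rule sum.cong) auto
  finally show ?thesis by simp
qed

lemma sv_col:
  fixes X U V :: "real^'n^'n"
  assumes V: "orthogonal_matrix V" and X: "X = U ** diag_mat s ** transpose V"
  shows "X *v column k V = s k *\<^sub>R column k U"
proof -
  have "X ** V = U ** diag_mat s ** (transpose V ** V)" unfolding X by (simp add: matrix_mul_assoc)
  also have "\<dots> = U ** diag_mat s" using V by (simp add: orthogonal_matrix_def)
  finally have XV: "X ** V = U ** diag_mat s" .
  show ?thesis
  proof (subst vec_eq_iff, rule allI)
    fix i
    have "(X *v column k V)$i = U$i$k * s k" by (simp only: mv_col XV diag_right)
    then show "(X *v column k V)$i = (s k *\<^sub>R column k U)$i" by (simp add: column_def)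
  qed
qed

lemma sv_norm:
  fixes X U V :: "real^'n^'n"
  assumes U: "orthogonal_matrix U" and V: "orthogonal_matrix V" and s: "s k \<ge> 0"
    and X: "X = U ** diag_mat s ** transpose V"
  shows "s k = norm (X *v column k V)"
  using sv_col[OF V X] U s by (simp add: orthogonal_matrix_orthonormal_columns)

lemma sv_zero:
  fixes X U V :: "real^'n^'n"
  assumes U: "orthogonal_matrix U" and V: "orthogonal_matrix V"
    and X: "X = U ** diag_mat s ** transpose V" and z: "X *v x = 0" "x \<noteq> 0"
  shows "\<exists>k. s k = 0"
proof (rule ccontr)
  assume "\<not> (\<exists>k. s k = 0)"
  then have sn: "s k \<noteq> 0" for k by auto
  define w where "w = transpose V *v x"
  have "X *v x = U *v (diag_mat s *v w)"
    unfolding X w_def by (simp only: matrix_vector_mul_assoc matrix_mul_assoc)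
  then have "transpose U *v (X *v x) = (transpose U ** U) *v (diag_mat s *v w)"
    by (simp only: matrix_vector_mul_assoc matrix_mul_assoc)
  also have "\<dots> = diag_mat s *v w" using U by (simp add: orthogonal_matrix_def)
  finally have "diag_mat s *v w = 0" using z by simp
  then have "w $ k = 0" for k
  proof -
    assume "diag_mat s *v w = 0"
    then have "(diag_mat s *v w) $ k = 0" by simp
    moreover have "(diag_mat s *v w) $ k = s k * w $ k"
    proof -
      have "(diag_mat s *v w) $ k = (\<Sum>l\<in>UNIV. (if k = l then s k else 0) * w $ l)"
        by (simp add: matrix_vector_mult_def diag_mat_def)
      also have "\<dots> = (\<Sum>l\<in>UNIV. if l = k then s k * w $ l else 0)"
        by (rule sum.cong) auto
      finally show ?thesis by simp
    qed
    ultimately show ?thesis using sn[of k] by simp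
  qed
  then have "w = 0" by (simp add: vec_eq_iff)
  then have "V *v w = 0" by simp
  moreover have "V *v w = x"
  proof -
    have "V *v w = (V ** transpose V) *v x" unfolding w_def by (simp only: matrix_vector_mul_assoc)
    then show ?thesis using V by (simp add: orthogonal_matrix_def)
  qed
  ultimately show False using z by simp
qed

definition ones :: "real^'n" where "ones = (\<chi> i. 1)"

lemma ones_nz: "(ones :: real^'n) \<noteq> 0"
  by (simp add: ones_def vec_eq_iff)

lemma ds_entry_le1:
  assumes "B \<in> doubly_stochastic"
  shows "B $ i $ j \<le> 1" "B $ i $ j \<ge> 0"
proof -
  have "B $ i $ j \<le> (\<Sum>j\<in>UNIV. B $ i $ j)"
    using assms by (intro member_le_sum) (auto simp: doubly_stochastic_def)
  then show "B $ i $ j \<le> 1" using assms by (simp add: doubly_stochastic_def)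
  show "B $ i $ j \<ge> 0" using assms by (simp add: doubly_stochastic_def)
qed

lemma norm_sq_vec: "(norm (x::real^'n))^2 = (\<Sum>i\<in>UNIV. (x$i)^2)"
proof -
  have "(norm x)^2 = x \<bullet> x" by (simp add: dot_square_norm)
  also have "\<dots> = (\<Sum>i\<in>UNIV. (x$i)^2)" by (simp add: inner_vec_def power2_eq_square)
  finally show ?thesis .
qed

lemma ds_contract:
  fixes B :: "real^'n^'n"
  assumes B: "B \<in> doubly_stochastic"
  shows "norm (B *v y) \<le> norm y"
proof -
  have rs: "(\<Sum>j\<in>UNIV. B$i$j) = 1" for i using B by (simp add: doubly_stochastic_def)
  have cs: "(\<Sum>i\<in>UNIV. B$i$j) = 1" for j using B by (simp add: doubly_stochastic_def)
  have nn: "B$i$j \<ge> 0" for i j using B by (simp add: doubly_stochastic_def)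
  have "(norm (B *v y))^2 = (\<Sum>i\<in>UNIV. (\<Sum>j\<in>UNIV. B$i$j * y$j)^2)"
    by (simp add: norm_sq_vec matrix_vector_mult_def)
  also have "\<dots> \<le> (\<Sum>i\<in>UNIV. \<Sum>j\<in>UNIV. B$i$j * (y$j)^2)"
  proof (rule sum_mono)
    fix i
    show "(\<Sum>j\<in>UNIV. B$i$j * y$j)^2 \<le> (\<Sum>j\<in>UNIV. B$i$j * (y$j)^2)"
      using convex_on_sum[OF finite_class.finite_UNIV UNIV_not_empty convex_power2, of "\<lambda>j. B$i$j" "\<lambda>j. y$j"]
        rs[of i] nn by simp
  qed
  also have "\<dots> = (\<Sum>j\<in>UNIV. (y$j)^2 * (\<Sum>i\<in>UNIV. B$i$j))"
    by (subst sum.swap) (simp add: sum_distrib_left mult.commute)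
  also have "\<dots> = (norm y)^2" by (simp add: cs norm_sq_vec)
  finally show ?thesis by (simp add: power2_le_iff_abs_le)
qed

lemma center_contract:
  fixes x :: "real^'n"
  shows "norm (x - (((\<Sum>i\<in>UNIV. x$i) / real CARD('n)) *\<^sub>R ones)) \<le> norm x"
proof -
  define \<mu> where "\<mu> = (\<Sum>i\<in>UNIV. x$i) / real CARD('n)"
  have sx: "(\<Sum>i\<in>UNIV. x$i) = real CARD('n) * \<mu>" by (simp add: \<mu>_def)
  have "(norm (x - \<mu> *\<^sub>R ones))^2 = (\<Sum>i\<in>UNIV. (x$i)^2 - 2 * \<mu> * x$i + \<mu>^2)"
    by (subst norm_sq_vec) (simp add: ones_def power2_eq_square algebra_simps)
  also have "\<dots> = (\<Sum>i\<in>UNIV. (x$i)^2) - real CARD('n) * \<mu>^2"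
    by (simp add: sum.distrib sum_subtractf sum_distrib_left[symmetric] sx power2_eq_square)
  also have "\<dots> \<le> (norm x)^2" by (simp add: norm_sq_vec)
  finally show ?thesis unfolding \<mu>_def by (simp add: power2_le_iff_abs_le)
qed

lemma JB_contract:
  fixes B :: "real^'n^'n"
  assumes B: "B \<in> doubly_stochastic"
  shows "norm ((Jmat - B) *v x) \<le> norm x"
proof -
  define \<mu> where "\<mu> = (\<Sum>i\<in>UNIV. x$i) / real CARD('n)"
  have rs: "(\<Sum>j\<in>UNIV. B$i$j) = 1" for i using B by (simp add: doubly_stochastic_def)
  have "(Jmat - B) *v x = - (B *v (x - \<mu> *\<^sub>R ones))"
  proof -
    have "(B *v (x - \<mu> *\<^sub>R ones)) $ i = (B *v x) $ i - \<mu>" for i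
      using rs[of i] by (simp add: matrix_vector_mult_def ones_def algebra_simps sum_subtractf
          sum_distrib_left[symmetric])
    moreover have "((Jmat - B) *v x) $ i = \<mu> - (B *v x) $ i" for i
      by (simp add: matrix_vector_mult_def Jmat_def \<mu>_def sum_subtractf algebra_simps
          sum_divide_distrib)
    ultimately show ?thesis by (simp add: vec_eq_iff)
  qed
  then have "norm ((Jmat - B) *v x) = norm (B *v (x - \<mu> *\<^sub>R ones))" by simp
  also have "\<dots> \<le> norm (x - \<mu> *\<^sub>R ones)" by (rule ds_contract[OF B])
  also have "\<dots> \<le> norm x" unfolding \<mu>_def by (rule center_contract)
  finally show ?thesis .
qed

lemma JB_ones: "B \<in> doubly_stochastic \<Longrightarrow> (Jmat - B) *v ones = (0::real^'n)"
  by (simp add: doubly_stochastic_def vec_eq_iff matrix_vector_mult_def Jmat_def ones_def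
      sum_subtractf)

lemma upper_D:
  fixes B :: "real^'n^'n"
  assumes B: "B \<in> doubly_stochastic" and p: "p > 0"
  shows "(\<Sum>k\<in>UNIV. singular_values (Jmat - B) k powr p) \<le> real CARD('n) - 1"
proof -
  define X where "X = Jmat - B"
  obtain U V where U: "orthogonal_matrix U" and V: "orthogonal_matrix V"
    and X: "X = U ** diag_mat (singular_values X) ** transpose V"
    using sv_spec[of X] by blast
  have s0: "singular_values X k \<ge> 0" for k using sv_spec[of X] by blast
  have le1: "singular_values X k \<le> 1" for k
  proof -
    have "singular_values X k = norm (X *v column k V)" by (rule sv_norm[OF U V s0 X])
    also have "\<dots> \<le> norm (column k V)" unfolding X_def by (rule JB_contract[OF B])
    also have "\<dots> = 1" using V by (simp add: orthogonal_matrix_orthonormal_columns)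
    finally show ?thesis .
  qed
  obtain k0 where k0: "singular_values X k0 = 0"
    using sv_zero[OF U V X _ ones_nz] JB_ones[OF B] unfolding X_def by blast
  have "(\<Sum>k\<in>UNIV. singular_values X k powr p)
      = singular_values X k0 powr p + (\<Sum>k\<in>UNIV-{k0}. singular_values X k powr p)"
    by (simp add: sum.remove)
  also have "\<dots> \<le> 0 + real (card (UNIV - {k0})) * 1"
    using k0 le1 s0 p by (intro add_mono sum_bounded_above powr_le1) auto
  also have "\<dots> = real CARD('n) - 1"
    by (simp add: card_Diff_singleton_if of_nat_diff)
  finally show ?thesis unfolding X_def .
qed

lemma sv_bound:
  fixes X :: "real^'n^'n"
  shows "singular_values X k \<le> (\<Sum>i\<in>UNIV. \<Sum>j\<in>UNIV. \<bar>X$i$j\<bar>)"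
proof -
  obtain U V where U: "orthogonal_matrix U" and V: "orthogonal_matrix V"
    and X: "X = U ** diag_mat (singular_values X) ** transpose V"
    using sv_spec[of X] by blast
  have s0: "singular_values X k \<ge> 0" using sv_spec[of X] by blast
  define v where "v = column k V"
  have v1: "\<bar>v$j\<bar> \<le> 1" for j
    using component_le_norm_cart[of v j] V by (simp add: v_def orthogonal_matrix_orthonormal_columns)
  have "singular_values X k = norm (X *v v)" unfolding v_def by (rule sv_norm[OF U V s0 X])
  also have "\<dots> \<le> (\<Sum>i\<in>UNIV. \<bar>(X *v v)$i\<bar>)" by (rule norm_le_l1_cart)
  also have "\<dots> \<le> (\<Sum>i\<in>UNIV. \<Sum>j\<in>UNIV. \<bar>X$i$j\<bar>)"
  proof (rule sum_mono)
    fix i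
    have "\<bar>(X *v v)$i\<bar> \<le> (\<Sum>j\<in>UNIV. \<bar>X$i$j * v$j\<bar>)"
      unfolding matrix_vector_mult_def by simp
    also have "\<dots> \<le> (\<Sum>j\<in>UNIV. \<bar>X$i$j\<bar>)"
      using v1 by (intro sum_mono) (simp add: abs_mult mult_left_le)
    finally show "\<bar>(X *v v)$i\<bar> \<le> (\<Sum>j\<in>UNIV. \<bar>X$i$j\<bar>)" .
  qed
  finally show ?thesis .
qed


lemma bern_pos:
  fixes p c :: real
  assumes p: "p > 1" and c: "c > 0" "c \<noteq> 1"
  shows "1 + p * (c - 1) < c powr p"
proof -
  define f where "f t = t powr p - 1 - p * (t - 1)" for t :: real
  have der: "DERIV f x :> p * x powr (p - 1) - p" if "x > 0" for x
    unfolding f_def using that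
    by (auto intro!: derivative_eq_intros has_real_derivative_powr)
  have f1: "f 1 = 0" by (simp add: f_def)
  show ?thesis
  proof (cases "c > 1")
    case True
    have "f 1 < f c"
    proof (rule DERIV_pos_imp_increasing_open[OF True])
      fix x assume x: "1 < x" "x < c"
      have "x powr (p - 1) > x powr 0" using x p by (intro powr_less_mono) auto
      then have "p * x powr (p - 1) - p > 0" using x p by simp
      then show "\<exists>y. DERIV f x :> y \<and> y > 0" using der[of x] x by auto
    next
      show "continuous_on {1..c} f" unfolding f_def
        by (intro continuous_intros) auto
    qed
    then show ?thesis using f1 by (simp add: f_def)
  next
    case False
    then have c1: "c < 1" using c by simp
    have "f c > f 1"
    proof (rule DERIV_neg_imp_decreasing_open[OF c1])
      fix x assume x: "c < x" "x < 1"
      have "x powr (p - 1) < x powr 0" using x p c by (intro powr_less_mono') auto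
      then have "p * x powr (p - 1) - p < 0" using x c p by simp
      then show "\<exists>y. DERIV f x :> y \<and> y < 0" using der[of x] x c by auto
    next
      show "continuous_on {c..1} f" unfolding f_def using c
        by (intro continuous_intros) auto
    qed
    then show ?thesis using f1 by (simp add: f_def)
  qed
qed

lemma bern_abs_strict:
  fixes p c :: real
  assumes p: "p > 1" and c: "c \<noteq> 1"
  shows "1 + p * (c - 1) < \<bar>c\<bar> powr p"
proof (cases "\<bar>c\<bar> = 1")
  case True
  then have "c = -1" using c by auto
  then show ?thesis using p by simp
next
  case False
  show ?thesis
  proof (cases "c = 0")
    case True then show ?thesis using p by simp
  next
    case c0: False
    have "1 + p * (\<bar>c\<bar> - 1) < \<bar>c\<bar> powr p" using bern_pos[OF p, of "\<bar>c\<bar>"] c0 False by auto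
    moreover have "1 + p * (c - 1) \<le> 1 + p * (\<bar>c\<bar> - 1)" using p by (intro add_left_mono mult_left_mono) auto
    ultimately show ?thesis by linarith
  qed
qed

lemma bern_abs:
  fixes p c :: real
  assumes p: "p > 1"
  shows "1 + p * (c - 1) \<le> \<bar>c\<bar> powr p"
  using bern_abs_strict[OF p, of c] by (cases "c = 1") auto

definition pm :: "('n \<Rightarrow> 'n) \<Rightarrow> real^'n^'n" where
  "pm \<sigma> = (\<chi> i j. if \<sigma> i = j then 1 else 0)"

lemma pm_mv: "(pm \<sigma> *v x) $ i = x $ (\<sigma> i)"
proof -
  have "(pm \<sigma> *v x) $ i = (\<Sum>j\<in>UNIV. (if \<sigma> i = j then 1 else 0) * x $ j)"
    by (simp add: pm_def matrix_vector_mult_def)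
  also have "\<dots> = (\<Sum>j\<in>UNIV. if j = \<sigma> i then x $ j else 0)"
    by (rule sum.cong) auto
  finally show ?thesis by simp
qed

lemma pmT_mv:
  assumes "bij \<sigma>"
  shows "(transpose (pm \<sigma>) *v x) $ i = x $ (inv \<sigma> i)"
proof -
  have "(transpose (pm \<sigma>) *v x) $ i = (\<Sum>j\<in>UNIV. (if \<sigma> j = i then 1 else 0) * x $ j)"
    by (simp add: pm_def matrix_vector_mult_def transpose_def)
  also have "\<dots> = (\<Sum>j\<in>UNIV. if j = inv \<sigma> i then x $ j else 0)"
    using assms by (intro sum.cong) (auto simp: bij_inv_eq_iff)
  finally show ?thesis by simp
qed

lemma pm_ds:
  assumes "bij \<sigma>"
  shows "pm \<sigma> \<in> doubly_stochastic"
proof -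
  have r: "(\<Sum>j\<in>UNIV. pm \<sigma> $ i $ j) = 1" for i
  proof -
    have "(\<Sum>j\<in>UNIV. pm \<sigma> $ i $ j) = (\<Sum>j\<in>UNIV. if \<sigma> i = j then 1 else 0)"
      by (simp add: pm_def)
    also have "\<dots> = (\<Sum>j\<in>UNIV. if j = \<sigma> i then 1 else 0)"
      by (rule sum.cong) auto
    finally show ?thesis by simp
  qed
  have c: "(\<Sum>i\<in>UNIV. pm \<sigma> $ i $ j) = 1" for j
  proof -
    have "(\<Sum>i\<in>UNIV. pm \<sigma> $ i $ j) = (\<Sum>i\<in>UNIV. if \<sigma> i = j then 1 else 0)"
      by (simp add: pm_def)
    also have "\<dots> = (\<Sum>i\<in>UNIV. if i = inv \<sigma> j then 1 else 0)"
      using assms by (intro sum.cong) (auto simp: bij_inv_eq_iff)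
    finally show ?thesis by simp
  qed
  show ?thesis unfolding doubly_stochastic_def using r c by (auto simp: pm_def)
qed

lemma J_ds: "(Jmat :: real^'n^'n) \<in> doubly_stochastic"
  by (simp add: doubly_stochastic_def Jmat_def)

definition tsig :: "real^'n^'n \<Rightarrow> ('n \<Rightarrow> 'n) \<Rightarrow> real" where
  "tsig A \<sigma> = (\<Sum>i\<in>UNIV. A $ i $ (\<sigma> i))"

definition ssum :: "real^'n^'n \<Rightarrow> real" where
  "ssum A = (\<Sum>i\<in>UNIV. \<Sum>j\<in>UNIV. A $ i $ j)"

lemma shift_inj0:
  fixes x k k' n :: nat
  assumes "k \<le> k'" "k' < n" "(x + k) mod n = (x + k') mod n"
  shows "k = k'"
proof -
  have "n dvd (x + k') - (x + k)" using assms(1,3) mod_eq_dvd_iff_nat[of "x+k" "x+k'" n] by simp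
  then have "n dvd k' - k" by simp
  moreover have "k' - k < n" using assms by simp
  ultimately have "k' - k = 0" using dvd_imp_le by (metis neq0_conv linorder_not_le)
  then show ?thesis using assms(1) by simp
qed

lemma shift_inj:
  fixes x k k' n :: nat
  assumes "k < n" "k' < n" "(x + k) mod n = (x + k') mod n"
  shows "k = k'"
  using shift_inj0[of k k' n x] shift_inj0[of k' k n x] assms by (cases "k \<le> k'") auto

lemma shift_bij:
  fixes x n :: nat
  assumes "n > 0"
  shows "bij_betw (\<lambda>k. (x + k) mod n) {0..<n} {0..<n}"
proof -
  have inj: "inj_on (\<lambda>k. (x + k) mod n) {0..<n}"
    by (rule inj_onI) (use shift_inj in auto)
  have sub: "(\<lambda>k. (x + k) mod n) ` {0..<n} \<subseteq> {0..<n}" using assms by auto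
  have "(\<lambda>k. (x + k) mod n) ` {0..<n} = {0..<n}" by (rule endo_inj_surj[OF _ sub inj]) simp
  then show ?thesis using inj by (simp add: bij_betw_def)
qed

lemma avg:
  fixes A :: "real^'n^'n"
  assumes \<sigma>: "bij \<sigma>"
  shows "\<exists>\<sigma>'. bij \<sigma>' \<and> tsig A \<sigma>' \<le> ssum A / real CARD('n) \<and>
      (tsig A \<sigma> \<noteq> ssum A / real CARD('n) \<longrightarrow> tsig A \<sigma>' < ssum A / real CARD('n))"
proof -
  define n where "n = CARD('n)"
  have n0: "n > 0" by (simp add: n_def)
  obtain g where g: "bij_betw g (UNIV::'n set) {0..<n}"
    using ex_bij_betw_finite_nat[of "UNIV::'n set"] by (auto simp: n_def)
  define h where "h = inv_into UNIV g"
  have h: "bij_betw h {0..<n} (UNIV::'n set)" unfolding h_def by (rule bij_betw_inv_into[OF g])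
  define \<tau> where "\<tau> k i = h ((g i + k) mod n)" for k i
  have hg: "h (g i) = i" for i unfolding h_def using g by (simp add: bij_betw_def)
  have gi: "g i < n" for i using g by (auto simp: bij_betw_def)
  have tau_bij: "bij (\<tau> k)" for k
  proof -
    have "bij_betw ((\<lambda>x. h ((x + k) mod n)) \<circ> g) UNIV UNIV"
    proof (rule bij_betw_trans[OF g])
      have "bij_betw (\<lambda>x. (k + x) mod n) {0..<n} {0..<n}" by (rule shift_bij[OF n0])
      then have "bij_betw (\<lambda>x. (x + k) mod n) {0..<n} {0..<n}" by (simp add: add.commute)
      then show "bij_betw (\<lambda>x. h ((x + k) mod n)) {0..<n} UNIV"
        using bij_betw_trans[OF _ h] by (simp add: comp_def)
    qed
    moreover have "\<tau> k = (\<lambda>x. h ((x + k) mod n)) \<circ> g" by (rule ext) (simp add: \<tau>_def)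
    ultimately show ?thesis by simp
  qed
  have tau0: "\<tau> 0 = id" by (auto simp: \<tau>_def hg gi)
  have tau_col: "bij_betw (\<lambda>k. \<sigma> (\<tau> k i)) {0..<n} UNIV" for i
  proof -
    have "bij_betw (\<lambda>k. (g i + k) mod n) {0..<n} {0..<n}" by (rule shift_bij[OF n0])
    then have "bij_betw (\<lambda>k. h ((g i + k) mod n)) {0..<n} UNIV"
      using bij_betw_trans[OF _ h] by (simp add: comp_def)
    then have "bij_betw (\<lambda>k. \<sigma> (h ((g i + k) mod n))) {0..<n} UNIV"
      using bij_betw_trans[OF _ \<sigma>] by (simp add: comp_def)
    then show ?thesis by (simp add: \<tau>_def)
  qed
  define t where "t k = tsig A (\<sigma> \<circ> \<tau> k)" for k
  have sumt: "(\<Sum>k\<in>{0..<n}. t k) = ssum A"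
  proof -
    have "(\<Sum>k\<in>{0..<n}. t k) = (\<Sum>i\<in>UNIV. \<Sum>k\<in>{0..<n}. A $ i $ (\<sigma> (\<tau> k i)))"
      unfolding t_def tsig_def by (subst sum.swap) simp
    also have "\<dots> = (\<Sum>i\<in>UNIV. \<Sum>j\<in>UNIV. A $ i $ j)"
      by (intro sum.cong refl sum.reindex_bij_betw[OF tau_col])
    finally show ?thesis by (simp add: ssum_def)
  qed
  define a where "a = ssum A / real CARD('n)"
  have suma: "(\<Sum>k\<in>{0..<n}. t k) = (\<Sum>k\<in>{0..<n}. a)" using sumt n0 by (simp add: a_def n_def)
  have bijk: "bij (\<sigma> \<circ> \<tau> k)" for k using \<sigma> tau_bij by (rule bij_comp[rotated])
  have t0: "t 0 = tsig A \<sigma>" by (simp add: t_def tau0)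
  show ?thesis
  proof (cases "tsig A \<sigma> < a")
    case True
    then show ?thesis using \<sigma> by (auto simp: a_def)
  next
    case False
    have "\<exists>k\<in>{0..<n}. t k < a \<or> (t k \<le> a \<and> tsig A \<sigma> = a)"
    proof (rule ccontr)
      assume "\<not> ?thesis"
      then have ge: "\<And>k. k \<in> {0..<n} \<Longrightarrow> a \<le> t k" and
        strict: "\<And>k. k \<in> {0..<n} \<Longrightarrow> tsig A \<sigma> = a \<Longrightarrow> a < t k" by (auto simp: not_less not_le)
      have "(\<Sum>k\<in>{0..<n}. a) < (\<Sum>k\<in>{0..<n}. t k)"
      proof (cases "tsig A \<sigma> = a")
        case True
        then show ?thesis using strict n0 by (intro sum_strict_mono) auto
      next
        case ne: False
        have "a < t 0" using ne False t0 by simp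
        then show ?thesis using ge n0 by (intro sum_strict_mono_ex1) auto
      qed
      then show False using suma by simp
    qed
    then obtain k where "t k < a \<or> (t k \<le> a \<and> tsig A \<sigma> = a)" by blast
    then show ?thesis using bijk[of k] unfolding t_def a_def by (intro exI[of _ "\<sigma> \<circ> \<tau> k"]) auto
  qed
qed


lemma orth_complete1:
  fixes x :: "real^'n"
  assumes "norm x = 1"
  shows "\<exists>U. orthogonal_matrix U \<and> column i0 U = x"
  using orthogonal_matrix_exists_basis[OF assms, of i0] by (metis matrix_vector_mult_basis)

lemma orth_complete2:
  fixes x y :: "real^'n" and i0 i1 :: 'n
  assumes nx: "norm x = 1" and ny: "norm y = 1" and xy: "x \<bullet> y = 0" and i01: "i0 \<noteq> i1"
  shows "\<exists>U. orthogonal_matrix U \<and> column i0 U = x \<and> column i1 U = y"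
proof -
  have x0: "x \<noteq> 0" and y0: "y \<noteq> 0" using nx ny by auto
  have xny: "x \<noteq> y" using xy x0 by auto
  have po: "pairwise orthogonal {x,y}"
    using xy by (auto simp: pairwise_def orthogonal_def inner_commute)
  obtain U' where U'1: "pairwise orthogonal ({x,y} \<union> U')"
    and U'2: "span ({x,y} \<union> U') = span ({x,y} \<union> UNIV)"
    using orthogonal_extension[OF po] by blast
  define S0 where "S0 = ({x,y} \<union> U') - {0}"
  have S0po: "pairwise orthogonal S0" unfolding S0_def using U'1 by (rule pairwise_mono) auto
  have S00: "0 \<notin> S0" by (simp add: S0_def)
  have S0ind: "independent S0" by (rule pairwise_orthogonal_independent[OF S0po S00])
  have S0span: "span S0 = UNIV" unfolding S0_def using U'2 by (simp add: span_UNIV)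
  have S0card: "card S0 = CARD('n)"
    using indep_card_eq_dim_span[OF S0ind] S0span by (simp add: dim_UNIV)
  have S0fin: "finite S0" using indep_card_eq_dim_span[OF S0ind] by simp
  have xS0: "x \<in> S0" and yS0: "y \<in> S0" using x0 y0 by (auto simp: S0_def)
  define S where "S = (\<lambda>v. v /\<^sub>R norm v) ` S0"
  have inj: "inj_on (\<lambda>v. v /\<^sub>R norm v) S0"
  proof (rule inj_onI)
    fix u v assume u: "u \<in> S0" and v: "v \<in> S0" and e: "u /\<^sub>R norm u = v /\<^sub>R norm v"
    show "u = v"
    proof (rule ccontr)
      assume "u \<noteq> v"
      then have "u \<bullet> v = 0" using S0po u v by (auto simp: pairwise_def orthogonal_def)
      then have "(u /\<^sub>R norm u) \<bullet> (v /\<^sub>R norm v) = 0" by simp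
      then have "(u /\<^sub>R norm u) \<bullet> (u /\<^sub>R norm u) = 0" using e by simp
      then have "u /\<^sub>R norm u = 0" by simp
      then show False using u S00 by (auto simp: divide_inverse)
    qed
  qed
  have Scard: "card S = CARD('n)" unfolding S_def using card_image[OF inj] S0card by simp
  have Sfin: "finite S" unfolding S_def using S0fin by simp
  have Sunit: "norm v = 1" if v: "v \<in> S" for v
  proof -
    obtain w where w: "w \<in> S0" "v = w /\<^sub>R norm w" using v by (auto simp: S_def)
    then have "w \<noteq> 0" using S00 by auto
    then show ?thesis using w by (simp add: sgn_div_norm[symmetric] norm_sgn)
  qed
  have Sorth: "u \<bullet> v = 0" if u: "u \<in> S" and v: "v \<in> S" and uv: "u \<noteq> v" for u v
  proof -
    obtain w1 where w1: "w1 \<in> S0" "u = w1 /\<^sub>R norm w1" using u by (auto simp: S_def)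
    obtain w2 where w2: "w2 \<in> S0" "v = w2 /\<^sub>R norm w2" using v by (auto simp: S_def)
    have "w1 \<noteq> w2" using w1 w2 uv by auto
    then have "w1 \<bullet> w2 = 0" using S0po w1 w2 by (auto simp: pairwise_def orthogonal_def)
    then show ?thesis using w1 w2 by simp
  qed
  have xS: "x \<in> S" unfolding S_def
  proof (rule image_eqI)
    show "x = x /\<^sub>R norm x" using nx by simp
  qed (rule xS0)
  have yS: "y \<in> S" unfolding S_def
  proof (rule image_eqI)
    show "y = y /\<^sub>R norm y" using ny by simp
  qed (rule yS0)
  obtain f0 where f0: "bij_betw f0 (UNIV::'n set) S"
    using finite_same_card_bij[OF finite_class.finite_UNIV Sfin] Scard by auto
  obtain j0 where j0: "f0 j0 = x" using f0 xS by (metis bij_betw_iff_bijections)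
  define f1 where "f1 = f0 \<circ> Transposition.transpose i0 j0"
  have f1: "bij_betw f1 UNIV S" unfolding f1_def by (rule bij_betw_trans[OF _ f0]) simp
  have f1x: "f1 i0 = x" by (simp add: f1_def j0)
  obtain j1 where j1: "f1 j1 = y" using f1 yS by (metis bij_betw_iff_bijections)
  have j10: "j1 \<noteq> i0" using j1 f1x xny by auto
  define f where "f = f1 \<circ> Transposition.transpose i1 j1"
  have f: "bij_betw f UNIV S" unfolding f_def by (rule bij_betw_trans[OF _ f1]) simp
  have fx: "f i0 = x" using i01 j10 f1x by (simp add: f_def)
  have fy: "f i1 = y" by (simp add: f_def j1)
  have orth: "orthogonal_matrix (mcols f)"
    unfolding orth_mcols
  proof (intro conjI allI impI)
    fix i show "norm (f i) = 1" using f Sunit by (auto simp: bij_betw_def)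
  next
    fix i j :: 'n assume "i \<noteq> j"
    then have "f i \<noteq> f j" using f by (auto simp: bij_betw_def inj_on_def)
    then show "f i \<bullet> f j = 0" using f Sorth by (auto simp: bij_betw_def)
  qed
  show ?thesis using orth fx fy by (intro exI[of _ "mcols f"]) simp
qed


declare transpose_matrix_vector[simp del]

definition ee :: "real^'n" where "ee = (1 / sqrt (real CARD('n))) *\<^sub>R ones"

lemma ones_nth[simp]: "(ones::real^'n) $ i = 1"
  by (simp add: ones_def)

lemma ones_inner_ones: "(ones::real^'n) \<bullet> ones = real CARD('n)"
  by (simp add: ones_def inner_vec_def)

lemma ones_inner: "(ones::real^'n) \<bullet> v = (\<Sum>i\<in>UNIV. v$i)"
  by (simp add: ones_def inner_vec_def)

lemma ones_inner_axis: "(ones::real^'n) \<bullet> axis k 1 = 1"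
  by (simp add: ones_inner axis_def)

lemma ee_inner_ee: "(ee::real^'n) \<bullet> ee = 1"
  by (simp add: ee_def ones_inner_ones)

lemma norm_ee: "norm (ee::real^'n) = 1"
  using ee_inner_ee by (simp add: norm_eq_1)

lemma orth_ee_ones: "(u::real^'n) \<bullet> ee = 0 \<longleftrightarrow> u \<bullet> ones = 0"
  by (simp add: ee_def)

lemma column_mult: "column i ((R::real^'n^'n) ** U) = R *v column i U"
  by (simp add: vec_eq_iff mv_col) (simp add: column_def)

lemma trace_orth:
  fixes U M :: "real^'n^'n"
  assumes U: "orthogonal_matrix U"
  shows "(\<Sum>k\<in>UNIV. column k U \<bullet> (M *v column k U)) = (\<Sum>k\<in>UNIV. M$k$k)"
proof -
  have UU: "(\<Sum>k\<in>UNIV. U$j$k * U$l$k) = (if j = l then 1 else 0)" for j l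
  proof -
    have "(U ** transpose U) $ j $ l = (mat 1 :: real^'n^'n) $ j $ l" using U by (simp add: orthogonal_matrix_def)
    then show ?thesis by (simp add: matrix_matrix_mult_def transpose_def mat_def)
  qed
  have "(\<Sum>k\<in>UNIV. column k U \<bullet> (M *v column k U)) = (\<Sum>k\<in>UNIV. \<Sum>j\<in>UNIV. \<Sum>l\<in>UNIV. U$j$k * M$j$l * U$l$k)"
    by (simp add: tmul_entry[symmetric] tAV_entry)
  also have "\<dots> = (\<Sum>j\<in>UNIV. \<Sum>l\<in>UNIV. \<Sum>k\<in>UNIV. M$j$l * (U$j$k * U$l$k))"
    by (subst sum.swap) (subst (2) sum.swap, simp add: ac_simps)
  also have "\<dots> = (\<Sum>j\<in>UNIV. \<Sum>l\<in>UNIV. M$j$l * (if j = l then 1 else 0))"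
    by (simp add: sum_distrib_left[symmetric] UU)
  also have "\<dots> = (\<Sum>j\<in>UNIV. M$j$j)"
  proof (rule sum.cong[OF refl])
    fix j
    have "(\<Sum>l\<in>UNIV. M$j$l * (if j = l then 1 else 0)) = (\<Sum>l\<in>UNIV. if l = j then M$j$l else 0)"
      by (rule sum.cong) auto
    then show "(\<Sum>l\<in>UNIV. M$j$l * (if j = l then 1 else 0)) = M$j$j" by simp
  qed
  finally show ?thesis .
qed

definition Rm :: "('n \<Rightarrow> 'n) \<Rightarrow> real^'n^'n" where
  "Rm \<sigma> = (\<chi> i j. 2 / real CARD('n) - (if \<sigma> j = i then 1 else 0))"

lemma Rm_col:
  fixes \<sigma> :: "'n::finite \<Rightarrow> 'n"
  shows "column k (Rm \<sigma>) = (2 / real CARD('n)) *\<^sub>R ones - axis (\<sigma> k) 1"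
  by (simp add: vec_eq_iff Rm_def column_def ones_def axis_def eq_commute)

lemma Rm_orth:
  fixes \<sigma> :: "'n::finite \<Rightarrow> 'n"
  assumes "bij \<sigma>"
  shows "orthogonal_matrix (Rm \<sigma>)"
  unfolding orthogonal_matrix_orthonormal_columns orthogonal_def Rm_col
proof (intro conjI allI impI)
  have n0: "real CARD('n) > 0" by simp
  fix i
  have "((2 / real CARD('n)) *\<^sub>R ones - axis (\<sigma> i) 1) \<bullet> ((2 / real CARD('n)) *\<^sub>R ones - axis (\<sigma> i) (1::real))
     = (2 / real CARD('n)) * (2 / real CARD('n)) * ((ones::real^'n) \<bullet> ones) - 2 * (2 / real CARD('n)) + 1"
    by (simp add: inner_diff_left inner_diff_right ones_inner_axis inner_commute[of "axis _ _" ones]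
        inner_axis_axis algebra_simps)
  also have "\<dots> = 1" using n0 by (simp add: ones_inner_ones field_simps)
  finally show "norm ((2 / real CARD('n)) *\<^sub>R ones - axis (\<sigma> i) (1::real)) = 1"
    by (simp add: norm_eq_1)
next
  have n0: "real CARD('n) > 0" by simp
  fix i j :: 'n assume ij: "i \<noteq> j"
  then have sij: "\<sigma> i \<noteq> \<sigma> j" using assms by (auto simp: bij_def inj_def)
  have "((2 / real CARD('n)) *\<^sub>R ones - axis (\<sigma> i) 1) \<bullet> ((2 / real CARD('n)) *\<^sub>R ones - axis (\<sigma> j) (1::real))
     = (2 / real CARD('n)) * (2 / real CARD('n)) * ((ones::real^'n) \<bullet> ones) - 2 * (2 / real CARD('n))"
    using sij by (simp add: inner_diff_left inner_diff_right ones_inner_axis inner_commute[of "axis _ _" ones]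
        inner_axis_axis algebra_simps)
  also have "\<dots> = 0" using n0 by (simp add: ones_inner_ones field_simps)
  finally show "((2 / real CARD('n)) *\<^sub>R ones - axis (\<sigma> i) 1) \<bullet> ((2 / real CARD('n)) *\<^sub>R ones - axis (\<sigma> j) (1::real)) = 0" .
qed

lemma Rm_mv:
  fixes \<sigma> :: "'n::finite \<Rightarrow> 'n"
  assumes "bij \<sigma>"
  shows "Rm \<sigma> *v v = ((2 / real CARD('n)) * (ones \<bullet> v)) *\<^sub>R ones - transpose (pm \<sigma>) *v v"
proof -
  have "(Rm \<sigma> *v v) $ i = (2 / real CARD('n)) * (\<Sum>j\<in>UNIV. v$j) - v $ (inv \<sigma> i)" for i
  proof -
    have "(Rm \<sigma> *v v) $ i = (\<Sum>j\<in>UNIV. (2 / real CARD('n)) * v$j - (if j = inv \<sigma> i then v$j else 0))"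
      using assms by (simp add: Rm_def matrix_vector_mult_def algebra_simps)
        (rule sum.cong, auto simp: bij_inv_eq_iff)
    also have "\<dots> = (2 / real CARD('n)) * (\<Sum>j\<in>UNIV. v$j) - v $ (inv \<sigma> i)"
      by (simp add: sum_subtractf sum_distrib_left)
    finally show ?thesis .
  qed
  then show ?thesis using assms by (simp add: vec_eq_iff pmT_mv ones_inner)
qed

lemma pmT_ones: "bij \<sigma> \<Longrightarrow> transpose (pm \<sigma>) *v ones = ones"
  by (simp add: vec_eq_iff pmT_mv ones_def)

lemma pm_ones: "pm \<sigma> *v ones = ones"
  by (simp add: vec_eq_iff pm_mv ones_def)

lemma pmT_orth_ones: "bij \<sigma> \<Longrightarrow> ones \<bullet> (transpose (pm \<sigma>) *v u) = ones \<bullet> u"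
  by (simp add: ones_inner pmT_mv) (rule sum.reindex_bij_betw, simp add: bij_betw_inv_into bij_imp_bij_inv)

lemma pm_pmT: "bij \<sigma> \<Longrightarrow> pm \<sigma> *v (transpose (pm \<sigma>) *v u) = u"
  by (simp add: vec_eq_iff pm_mv pmT_mv bij_is_inj inv_f_f)

lemma ones_inner_ee: "(ones::real^'n) \<bullet> ee = sqrt (real CARD('n))"
proof -
  have "(ones::real^'n) \<bullet> ee = real CARD('n) / sqrt (real CARD('n))"
    by (simp add: ee_def ones_inner_ones)
  also have "\<dots> = sqrt (real CARD('n))" by (simp add: real_div_sqrt)
  finally show ?thesis .
qed

lemma pmT_ee: "bij \<sigma> \<Longrightarrow> transpose (pm \<sigma>) *v ee = ee"
  by (simp add: ee_def mv_scale pmT_ones)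

lemma Rm_ee:
  fixes \<sigma> :: "'n::finite \<Rightarrow> 'n"
  assumes "bij \<sigma>"
  shows "Rm \<sigma> *v ee = ee"
proof -
  have "Rm \<sigma> *v ee = ((2 / real CARD('n)) * sqrt (real CARD('n))) *\<^sub>R ones - ee"
    using assms by (simp add: Rm_mv ones_inner_ee pmT_ee)
  also have "(2 / real CARD('n)) * sqrt (real CARD('n)) = 2 * (1 / sqrt (real CARD('n)))"
  proof -
    have n: "real CARD('n) > 0" by simp
    have s: "sqrt (real CARD('n)) * sqrt (real CARD('n)) = real CARD('n)" by simp
    have "sqrt (real CARD('n)) > 0" using n by simp
    then show ?thesis by (subst (2) s[symmetric]) (simp add: field_simps)
  qed
  finally show ?thesis by (simp add: ee_def algebra_simps scaleR_diff_left[symmetric])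
qed


lemma ones_A_ones: "(ones::real^'n) \<bullet> ((A::real^'n^'n) *v ones) = ssum A"
  by (simp add: ones_inner matrix_vector_mult_def ssum_def)

lemma ee_A_ee: "(ee::real^'n) \<bullet> ((A::real^'n^'n) *v ee) = ssum A / real CARD('n)"
proof -
  have "(ee::real^'n) \<bullet> (A *v ee) = (1 / sqrt (real CARD('n))) * (1 / sqrt (real CARD('n))) * (ones \<bullet> (A *v ones))"
    by (simp add: ee_def mv_scale)
  also have "\<dots> = ssum A / real CARD('n)" by (simp add: ones_A_ones)
  finally show ?thesis .
qed

lemma pm_ee: "pm \<sigma> *v ee = ee"
  by (simp add: ee_def mv_scale pm_ones)

lemma tr_entry:
  fixes A :: "real^'n^'n" and \<sigma> :: "'n \<Rightarrow> 'n"
  shows "((A - pm \<sigma>) ** Rm \<sigma>) $ k $ k = (2 / real CARD('n)) * (\<Sum>j\<in>UNIV. A$k$j) - A$k$(\<sigma> k)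
      - 2 / real CARD('n) + 1"
proof -
  have "((A - pm \<sigma>) ** Rm \<sigma>) $ k $ k = (\<Sum>j\<in>UNIV. (2 / real CARD('n)) * A$k$j
      - (if \<sigma> k = j then A$k$j else 0) - (if \<sigma> k = j then 2 / real CARD('n) else 0)
      + (if \<sigma> k = j then 1 else 0))"
    by (simp add: matrix_matrix_mult_def Rm_def pm_def algebra_simps) (rule sum.cong, auto)
  also have "\<dots> = (2 / real CARD('n)) * (\<Sum>j\<in>UNIV. A$k$j) - A$k$(\<sigma> k) - 2 / real CARD('n) + 1"
    by (simp add: sum.distrib sum_subtractf sum_distrib_left)
  finally show ?thesis .
qed

lemma tr_sum:
  fixes A :: "real^'n^'n" and \<sigma> :: "'n \<Rightarrow> 'n"
  shows "(\<Sum>k\<in>UNIV. ((A - pm \<sigma>) ** Rm \<sigma>) $ k $ k) =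
    2 * (ssum A / real CARD('n)) - tsig A \<sigma> - 2 + real CARD('n)"
  by (simp add: tr_entry sum.distrib sum_subtractf sum_distrib_left[symmetric] ssum_def tsig_def
      sum_divide_distrib[symmetric])

lemma main_core:
  fixes A U :: "real^'n^'n" and \<sigma> :: "'n \<Rightarrow> 'n"
  assumes p: "p \<ge> 1" and \<sigma>: "bij \<sigma>" and U: "orthogonal_matrix U" and col: "column i0 U = ee"
  shows "\<exists>T. \<bar>ssum A / real CARD('n) - 1\<bar> powr p + (\<Sum>k\<in>UNIV-{i0}. \<bar>T k\<bar> powr p)
             \<le> (\<Sum>k\<in>UNIV. singular_values (A - pm \<sigma>) k powr p)
      \<and> (\<Sum>k\<in>UNIV-{i0}. T k) = real CARD('n) - 1 + ssum A / real CARD('n) - tsig A \<sigma>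
      \<and> (\<forall>k. k \<noteq> i0 \<longrightarrow> T k = 1 - column k U \<bullet> (A *v (transpose (pm \<sigma>) *v column k U)))"
proof -
  define P where "P = pm \<sigma>"
  define R where "R = Rm \<sigma>"
  define W where "W = R ** U"
  define T where "T k = (transpose U ** (A - P) ** W) $ k $ k" for k
  have Wo: "orthogonal_matrix W" unfolding W_def R_def using Rm_orth[OF \<sigma>] U by (rule orthogonal_matrix_mul)
  have low: "(\<Sum>k\<in>UNIV. \<bar>T k\<bar> powr p) \<le> (\<Sum>k\<in>UNIV. singular_values (A - P) k powr p)"
    unfolding T_def by (rule lower_C[OF p U Wo])
  have Tk: "T k = column k U \<bullet> (((A - P) ** R) *v column k U)" for k
    unfolding T_def tmul_entry W_def column_mult by (simp add: matrix_vector_mul_assoc)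
  have sumT: "(\<Sum>k\<in>UNIV. T k) = 2 * (ssum A / real CARD('n)) - tsig A \<sigma> - 2 + real CARD('n)"
    unfolding Tk trace_orth[OF U] P_def R_def by (rule tr_sum)
  have T0: "T i0 = ssum A / real CARD('n) - 1"
  proof -
    have "T i0 = ee \<bullet> ((A - P) *v (R *v ee))"
      unfolding Tk col by (simp add: matrix_vector_mul_assoc)
    also have "\<dots> = ee \<bullet> (A *v ee) - ee \<bullet> (P *v ee)"
      unfolding R_def Rm_ee[OF \<sigma>] by (simp add: mdiff_v inner_diff_right)
    also have "\<dots> = ssum A / real CARD('n) - 1"
      by (simp add: ee_A_ee P_def pm_ee ee_inner_ee)
    finally show ?thesis .
  qed
  have Toth: "T k = 1 - column k U \<bullet> (A *v (transpose (pm \<sigma>) *v column k U))" if k: "k \<noteq> i0" for k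
  proof -
    define u where "u = column k U"
    have "column k U \<bullet> column i0 U = 0" using U k
      by (simp add: orthogonal_matrix_orthonormal_columns orthogonal_def)
    then have uee: "u \<bullet> ee = 0" using col by (simp add: u_def)
    have u1: "u \<bullet> ones = 0" using uee by (simp add: orth_ee_ones)
    have uu: "u \<bullet> u = 1" using U by (simp add: u_def orthogonal_matrix_orthonormal_columns norm_eq_1)
    have Ru: "R *v u = - (transpose P *v u)"
      unfolding R_def P_def using u1 by (simp add: Rm_mv[OF \<sigma>] inner_commute)
    have "T k = u \<bullet> ((A - P) *v (R *v u))"
      unfolding Tk u_def by (simp add: matrix_vector_mul_assoc)
    also have "\<dots> = u \<bullet> (P *v (transpose P *v u)) - u \<bullet> (A *v (transpose P *v u))"
      unfolding Ru by (simp add: mdiff_v mv_minus inner_diff_right)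
    also have "\<dots> = 1 - u \<bullet> (A *v (transpose P *v u))"
      unfolding P_def pm_pmT[OF \<sigma>] uu ..
    finally show ?thesis by (simp add: u_def P_def)
  qed
  have split: "(\<Sum>k\<in>UNIV. f k) = f i0 + (\<Sum>k\<in>UNIV-{i0}. f k)" for f :: "'n \<Rightarrow> real"
    by (simp add: sum.remove)
  show ?thesis
  proof (intro exI conjI allI impI)
    show "\<bar>ssum A / real CARD('n) - 1\<bar> powr p + (\<Sum>k\<in>UNIV-{i0}. \<bar>T k\<bar> powr p)
             \<le> (\<Sum>k\<in>UNIV. singular_values (A - pm \<sigma>) k powr p)"
      using low unfolding split[of "\<lambda>k. \<bar>T k\<bar> powr p"] T0 P_def .
    show "(\<Sum>k\<in>UNIV-{i0}. T k) = real CARD('n) - 1 + ssum A / real CARD('n) - tsig A \<sigma>"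
      using sumT unfolding split[of T] T0 by simp
  next
    fix k assume "k \<noteq> i0"
    then show "T k = 1 - column k U \<bullet> (A *v (transpose (pm \<sigma>) *v column k U))" by (rule Toth)
  qed
qed

lemma bern_sum:
  fixes T :: "'n \<Rightarrow> real"
  assumes p: "p > 1"
  shows "real (card S) + p * ((\<Sum>k\<in>S. T k) - real (card S)) \<le> (\<Sum>k\<in>S. \<bar>T k\<bar> powr p)"
    and "finite S \<Longrightarrow> k \<in> S \<Longrightarrow> T k \<noteq> 1 \<Longrightarrow>
       real (card S) + p * ((\<Sum>k\<in>S. T k) - real (card S)) < (\<Sum>k\<in>S. \<bar>T k\<bar> powr p)"
proof -
  have e: "real (card S) + p * ((\<Sum>k\<in>S. T k) - real (card S)) = (\<Sum>k\<in>S. 1 + p * (T k - 1))"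
    by (cases "finite S") (simp_all add: sum.distrib sum_subtractf sum_distrib_left[symmetric] algebra_simps)
  show "real (card S) + p * ((\<Sum>k\<in>S. T k) - real (card S)) \<le> (\<Sum>k\<in>S. \<bar>T k\<bar> powr p)"
    unfolding e by (intro sum_mono bern_abs[OF p])
  assume S: "finite S" and k: "k \<in> S" and Tk: "T k \<noteq> 1"
  show "real (card S) + p * ((\<Sum>k\<in>S. T k) - real (card S)) < (\<Sum>k\<in>S. \<bar>T k\<bar> powr p)"
    unfolding e using S k Tk bern_abs[OF p] bern_abs_strict[OF p] by (intro sum_strict_mono_ex1) auto
qed

lemma main_ineq:
  fixes A U :: "real^'n^'n" and \<sigma> :: "'n \<Rightarrow> 'n"
  assumes p: "p > 1" and \<sigma>: "bij \<sigma>" and U: "orthogonal_matrix U" and col: "column i0 U = ee"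
  shows "\<bar>ssum A / real CARD('n) - 1\<bar> powr p + (real CARD('n) - 1)
      + p * (ssum A / real CARD('n) - tsig A \<sigma>) \<le> (\<Sum>k\<in>UNIV. singular_values (A - pm \<sigma>) k powr p)"
    and "(\<exists>i. i \<noteq> i0 \<and> column i U \<bullet> (A *v (transpose (pm \<sigma>) *v column i U)) \<noteq> 0) \<Longrightarrow>
      \<bar>ssum A / real CARD('n) - 1\<bar> powr p + (real CARD('n) - 1)
      + p * (ssum A / real CARD('n) - tsig A \<sigma>) < (\<Sum>k\<in>UNIV. singular_values (A - pm \<sigma>) k powr p)"
proof -
  obtain T where T1: "\<bar>ssum A / real CARD('n) - 1\<bar> powr p + (\<Sum>k\<in>UNIV-{i0}. \<bar>T k\<bar> powr p)
             \<le> (\<Sum>k\<in>UNIV. singular_values (A - pm \<sigma>) k powr p)"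
    and T2: "(\<Sum>k\<in>UNIV-{i0}. T k) = real CARD('n) - 1 + ssum A / real CARD('n) - tsig A \<sigma>"
    and T3: "\<forall>k. k \<noteq> i0 \<longrightarrow> T k = 1 - column k U \<bullet> (A *v (transpose (pm \<sigma>) *v column k U))"
    using main_core[OF _ \<sigma> U col, of p A] p by auto
  have card: "real (card (UNIV - {i0})) = real CARD('n) - 1"
    by (simp add: card_Diff_singleton_if of_nat_diff)
  have e: "real (card (UNIV-{i0})) + p * ((\<Sum>k\<in>UNIV-{i0}. T k) - real (card (UNIV-{i0})))
      = (real CARD('n) - 1) + p * (ssum A / real CARD('n) - tsig A \<sigma>)"
    unfolding card T2 by simp
  show "\<bar>ssum A / real CARD('n) - 1\<bar> powr p + (real CARD('n) - 1)
      + p * (ssum A / real CARD('n) - tsig A \<sigma>) \<le> (\<Sum>k\<in>UNIV. singular_values (A - pm \<sigma>) k powr p)"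
    using bern_sum(1)[OF p, of "UNIV-{i0}" T] T1 unfolding e by linarith
  assume "\<exists>i. i \<noteq> i0 \<and> column i U \<bullet> (A *v (transpose (pm \<sigma>) *v column i U)) \<noteq> 0"
  then obtain i where i: "i \<noteq> i0" "column i U \<bullet> (A *v (transpose (pm \<sigma>) *v column i U)) \<noteq> 0" by blast
  have "T i \<noteq> 1" using T3 i by auto
  then show "\<bar>ssum A / real CARD('n) - 1\<bar> powr p + (real CARD('n) - 1)
      + p * (ssum A / real CARD('n) - tsig A \<sigma>) < (\<Sum>k\<in>UNIV. singular_values (A - pm \<sigma>) k powr p)"
    using bern_sum(2)[OF p, of "UNIV-{i0}" i T] T1 i(1) unfolding e by auto
qed


lemma pmT_id: "transpose (pm id) *v u = (u::real^'n)"
  by (simp add: vec_eq_iff pmT_mv)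

lemma pmT_swap:
  fixes u :: "real^'n"
  assumes ab: "a \<noteq> b"
  shows "transpose (pm (Transposition.transpose a b)) *v u = u - (u$a - u$b) *\<^sub>R (axis a 1 - axis b 1)"
  using ab by (auto simp: vec_eq_iff pmT_mv axis_def Transposition.transpose_def)

lemma ones_axis_diff: "(ones::real^'n) \<bullet> (axis a 1 - axis b 1) = 0"
  by (simp add: inner_diff_right ones_inner_axis)

lemma axis_diff_nth: "(axis a 1 - axis b 1 :: real^'n) $ a - (axis a 1 - axis b 1 :: real^'n) $ b = (if a = b then 0 else 2)"
  by (simp add: axis_def)

lemma qaq:
  fixes A :: "real^'n^'n"
  assumes H: "\<And>\<sigma> u. bij \<sigma> \<Longrightarrow> u \<bullet> ones = 0 \<Longrightarrow> u \<bullet> (A *v (transpose (pm \<sigma>) *v u)) = 0"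
    and g: "g \<bullet> ones = 0" and h: "h \<bullet> ones = 0"
  shows "g \<bullet> (A *v h) = 0"
proof -
  have F0: "u \<bullet> (A *v u) = 0" if "u \<bullet> ones = 0" for u
    using H[of id u] that by (simp add: pmT_id)
  have F1: "(u$a - u$b) * (u \<bullet> (A *v (axis a 1 - axis b 1))) = 0" if "u \<bullet> ones = 0" "a \<noteq> b" for u a b
  proof -
    have "0 = u \<bullet> (A *v (u - (u$a - u$b) *\<^sub>R (axis a 1 - axis b 1)))"
      using H[of "Transposition.transpose a b" u] that by (simp add: pmT_swap)
    also have "\<dots> = u \<bullet> (A *v u) - (u$a - u$b) * (u \<bullet> (A *v (axis a 1 - axis b 1)))"
      by (simp add: mv_diff mv_scale inner_diff_right)
    finally show ?thesis using F0[OF that(1)] by simp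
  qed
  have F2: "g \<bullet> (A *v (axis a 1 - axis b 1)) = 0" if g: "g \<bullet> ones = 0" and ab: "a \<noteq> b" for g a b
  proof -
    define f :: "real^'n" where "f = axis a 1 - axis b 1"
    have f1: "f \<bullet> ones = 0" unfolding f_def by (simp add: inner_commute ones_axis_diff)
    have fd: "f$a - f$b = 2" using ab by (simp add: f_def axis_def)
    have ff: "f \<bullet> (A *v f) = 0" using F0[OF f1] .
    show ?thesis
    proof (cases "g$a - g$b \<ge> 0")
      case True
      have "((f+g)$a - (f+g)$b) * ((f + g) \<bullet> (A *v f)) = 0"
        using F1[of "f+g" a b] f1 g ab by (simp add: inner_add_left f_def)
      moreover have "(f+g)$a - (f+g)$b > 0" using fd True by simp
      ultimately have "(f + g) \<bullet> (A *v f) = 0" by simp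
      then show ?thesis using ff by (simp add: inner_add_left f_def)
    next
      case False
      have "((f-g)$a - (f-g)$b) * ((f - g) \<bullet> (A *v f)) = 0"
        using F1[of "f-g" a b] f1 g ab by (simp add: inner_diff_left f_def)
      moreover have "(f-g)$a - (f-g)$b > 0" using fd False by simp
      ultimately have "(f - g) \<bullet> (A *v f) = 0" by simp
      then show ?thesis using ff by (simp add: inner_diff_left f_def)
    qed
  qed
  obtain a0 :: 'n where True by simp
  define c where "c = g \<bullet> (A *v axis a0 1)"
  have col: "g \<bullet> (A *v axis b 1) = c" for b
  proof (cases "b = a0")
    case True then show ?thesis by (simp add: c_def)
  next
    case False
    then have "g \<bullet> (A *v (axis b 1 - axis a0 1)) = 0" by (rule F2[OF g])
    then show ?thesis by (simp add: c_def mv_diff inner_diff_right)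
  qed
  have colsum: "g \<bullet> (A *v axis b 1) = (\<Sum>i\<in>UNIV. g$i * A$i$b)" for b
    by (simp add: inner_vec_def matrix_vector_mult_def axis_def if_distrib[of "\<lambda>x. _ * x"] cong: if_cong)
  have "g \<bullet> (A *v h) = (\<Sum>i\<in>UNIV. \<Sum>b\<in>UNIV. g$i * A$i$b * h$b)"
    by (simp add: inner_vec_def matrix_vector_mult_def sum_distrib_left mult.assoc)
  also have "\<dots> = (\<Sum>b\<in>UNIV. \<Sum>i\<in>UNIV. g$i * A$i$b * h$b)" by (rule sum.swap)
  also have "\<dots> = (\<Sum>b\<in>UNIV. h$b * (\<Sum>i\<in>UNIV. g$i * A$i$b))"
    by (simp add: sum_distrib_left mult.commute)
  also have "\<dots> = (\<Sum>b\<in>UNIV. h$b * c)" using col colsum by simp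
  also have "\<dots> = c * (h \<bullet> ones)" by (simp add: ones_inner inner_commute sum_distrib_left ac_simps)
  finally show ?thesis using h by simp
qed

lemma A_is_J:
  fixes A :: "real^'n^'n"
  assumes rows: "A *v ones = ones" and cols: "transpose A *v ones = ones"
    and q: "\<And>g h. g \<bullet> ones = 0 \<Longrightarrow> h \<bullet> ones = 0 \<Longrightarrow> g \<bullet> (A *v h) = 0"
  shows "A = Jmat"
proof -
  have rs: "(\<Sum>l\<in>UNIV. A$i$l) = 1" for i
    using arg_cong[OF rows, of "\<lambda>v. v$i"] by (simp add: matrix_vector_mult_def)
  have cs: "(\<Sum>k\<in>UNIV. A$k$j) = 1" for j
    using arg_cong[OF cols, of "\<lambda>v. v$j"] by (simp add: matrix_vector_mult_def transpose_def)
  have ss: "(\<Sum>k\<in>UNIV. \<Sum>l\<in>UNIV. A$k$l) = real CARD('n)" by (simp add: rs)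
  have e: "A$i$j - A$i$l - A$k$j + A$k$l = 0" for i j k l
  proof -
    have "(axis i 1 - axis k 1) \<bullet> (A *v (axis j 1 - axis l 1)) = 0"
      by (rule q) (simp_all add: inner_commute ones_axis_diff)
    then show ?thesis by (simp add: mv_diff inner_diff_left inner_diff_right axis_mat_axis)
  qed
  have "A$i$j = 1 / real CARD('n)" for i j
  proof -
    have "(\<Sum>k\<in>UNIV. \<Sum>l\<in>UNIV. A$i$j - A$i$l - A$k$j + A$k$l) = 0" by (simp add: e)
    then have "real CARD('n) * real CARD('n) * A$i$j - real CARD('n) * 1 - real CARD('n) * 1 + real CARD('n) = 0"
      by (simp add: sum.distrib sum_subtractf rs ss) (simp add: sum_distrib_left[symmetric] cs)
    then have "real CARD('n) * (real CARD('n) * A$i$j - 1) = 0" by (simp add: algebra_simps)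
    then show ?thesis by (simp add: field_simps)
  qed
  then show ?thesis by (simp add: vec_eq_iff Jmat_def)
qed


lemma exists_other:
  fixes g :: "real^'n" and i0 :: 'n
  assumes "g \<bullet> ones = 0" "g \<noteq> 0"
  shows "\<exists>i1. i1 \<noteq> i0"
proof (rule ccontr)
  assume "\<not> ?thesis"
  then have all: "\<And>i. i = i0" by auto
  have U1: "(UNIV::'n set) = {i0}" using all by auto
  have "g \<bullet> ones = (\<Sum>i\<in>UNIV. g$i)" by (simp add: inner_commute ones_inner)
  also have "\<dots> = g $ i0" unfolding U1 by simp
  finally have "g \<bullet> ones = g $ i0" .
  then have "g $ i0 = 0" using assms by simp
  then have "g = 0" using all by (simp add: vec_eq_iff) (metis all)
  then show False using assms by simp
qed

lemma case4:
  fixes A :: "real^'n^'n"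
  assumes p: "p > 1" and a1: "ssum A = real CARD('n)"
    and q: "\<And>g h. g \<bullet> ones = 0 \<Longrightarrow> h \<bullet> ones = 0 \<Longrightarrow> g \<bullet> (A *v h) = 0"
    and gam: "A *v ones \<noteq> ones"
  shows "\<exists>U W. orthogonal_matrix U \<and> orthogonal_matrix W \<and>
     real CARD('n) - 1 < (\<Sum>k\<in>UNIV. \<bar>(transpose U ** (A - mat 1) ** W) $ k $ k\<bar> powr p)"
proof -
  define n where "n = real CARD('n)"
  have n0: "n > 0" by (simp add: n_def)
  define \<gamma> where "\<gamma> = A *v ones - ones"
  have \<gamma>0: "\<gamma> \<noteq> 0" using gam by (simp add: \<gamma>_def)
  have \<gamma>1: "\<gamma> \<bullet> ones = 0"
    unfolding \<gamma>_def by (subst inner_commute) (simp add: inner_diff_right ones_A_ones ones_inner_ones a1)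
  define g where "g = \<gamma> /\<^sub>R norm \<gamma>"
  have ng: "norm g = 1" using \<gamma>0 by (simp add: g_def)
  have gg: "g \<bullet> g = 1" using ng by (simp add: norm_eq_1)
  have g1: "g \<bullet> ones = 0" using \<gamma>1 by (simp add: g_def)
  have gee: "ee \<bullet> g = 0" using g1 orth_ee_ones[of g] by (metis inner_commute)
  have g0: "g \<noteq> 0" using ng by auto
  obtain i0 :: 'n where True by simp
  obtain i1 where i01: "i1 \<noteq> i0" using exists_other[OF g1 g0] by metis
  obtain U where U: "orthogonal_matrix U" and Ui0: "column i0 U = ee" and Ui1: "column i1 U = g"
    using orth_complete2[OF norm_ee ng gee i01[symmetric]] by blast
  have Uorth: "k \<noteq> l \<Longrightarrow> column k U \<bullet> column l U = 0" for k l
    using U by (simp add: orthogonal_matrix_orthonormal_columns orthogonal_def)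
  have Unorm: "column k U \<bullet> column k U = 1" for k
    using U by (simp add: orthogonal_matrix_orthonormal_columns norm_eq_1)
  define \<Gamma> where "\<Gamma> = norm \<gamma> / sqrt n"
  have \<Gamma>0: "\<Gamma> > 0" using \<gamma>0 n0 by (simp add: \<Gamma>_def)
  define r where "r = sqrt (1 + \<Gamma>^2)"
  have r1: "r > 1" unfolding r_def using \<Gamma>0 by (simp add: real_less_rsqrt)
  have rr: "r * r = 1 + \<Gamma>^2" unfolding r_def by simp
  define c where "c = \<Gamma> / r"
  define s where "s = 1 / r"
  have cs: "c * c + s * s = 1"
  proof -
    have h: "1 + \<Gamma> * \<Gamma> > 0" by (simp add: add_pos_nonneg)
    have "c * c + s * s = (\<Gamma> * \<Gamma> + 1) / (r * r)" by (simp add: c_def s_def add_divide_distrib)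
    also have "\<dots> = 1" using rr h by (simp add: power2_eq_square add.commute)
    finally show ?thesis .
  qed
  define w where "w k = (if k = i0 then (-s) *\<^sub>R ee - c *\<^sub>R g else if k = i1 then c *\<^sub>R ee - s *\<^sub>R g
      else - column k U)" for k
  have eeU: "k \<noteq> i0 \<Longrightarrow> ee \<bullet> column k U = 0" for k using Uorth[of i0 k] Ui0 by simp
  have gU: "k \<noteq> i1 \<Longrightarrow> g \<bullet> column k U = 0" for k using Uorth[of i1 k] Ui1 by simp
  have eeee: "ee \<bullet> (ee::real^'n) = 1" by (rule ee_inner_ee)
  have W: "orthogonal_matrix (mcols w)"
    unfolding orth_mcols norm_eq_1
  proof (intro conjI allI impI)
    fix k
    show "w k \<bullet> w k = 1"
      using cs i01 Unorm[of k] gee gg eeee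
      by (cases "k = i0"; cases "k = i1")
         (simp_all add: w_def inner_diff_left inner_diff_right inner_commute[of g ee] algebra_simps)
  next
    fix k l :: 'n assume kl: "k \<noteq> l"
    show "w k \<bullet> w l = 0"
      using kl i01 gee gg eeee Uorth[OF kl] eeU[of k] eeU[of l] gU[of k] gU[of l]
      by (cases "k = i0"; cases "k = i1"; cases "l = i0"; cases "l = i1")
         (simp_all add: w_def inner_diff_left inner_diff_right inner_commute[of g ee]
           inner_commute[of "column _ U" ee] inner_commute[of "column _ U" g] algebra_simps)
  qed
  define T where "T k = (transpose U ** (A - mat 1) ** mcols w) $ k $ k" for k
  have Tk: "T k = column k U \<bullet> ((A - mat 1) *v w k)" for k
    unfolding T_def tmul_entry by simp
  have gAee: "g \<bullet> (A *v ee) = \<Gamma>"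
  proof -
    have "g \<bullet> (A *v ee) = (1 / sqrt n) * (g \<bullet> (A *v ones))"
      by (simp add: ee_def n_def mv_scale)
    also have "g \<bullet> (A *v ones) = g \<bullet> \<gamma>" using g1 by (simp add: \<gamma>_def inner_diff_right)
    also have "g \<bullet> \<gamma> = norm \<gamma>" using \<gamma>0 by (simp add: g_def dot_square_norm power2_eq_square)
    finally show ?thesis by (simp add: \<Gamma>_def)
  qed
  have gAg: "g \<bullet> (A *v g) = 0" by (rule q[OF g1 g1])
  have Ti1: "T i1 = r"
  proof -
    have "T i1 = g \<bullet> ((A - mat 1) *v (c *\<^sub>R ee - s *\<^sub>R g))"
      unfolding Tk Ui1 using i01 by (simp add: w_def)
    also have "\<dots> = c * \<Gamma> + s"
      using gAee gAg gee gg by (simp add: mdiff_v mv_diff mv_scale inner_diff_right inner_commute[of g ee])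
    also have "\<dots> = r" using rr r1 by (simp add: c_def s_def field_simps power2_eq_square)
    finally show ?thesis .
  qed
  have Toth: "T k = 1" if "k \<noteq> i0" "k \<noteq> i1" for k
  proof -
    define u where "u = column k U"
    have u1: "u \<bullet> ones = 0" using eeU[OF that(1)] orth_ee_ones[of u] unfolding u_def by (metis inner_commute)
    have "T k = u \<bullet> ((A - mat 1) *v (- u))" unfolding Tk u_def using that by (simp add: w_def)
    also have "\<dots> = u \<bullet> u - u \<bullet> (A *v u)" by (simp add: mdiff_v mv_minus inner_diff_right)
    also have "\<dots> = 1" using q[OF u1 u1] Unorm[of k] by (simp add: u_def)
    finally show ?thesis .
  qed
  have c2: "2 \<le> CARD('n)" using card_mono[of UNIV "{i0,i1}"] i01 by simp
  have card: "real (card (UNIV - {i0, i1})) = n - 2"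
    using i01 c2 by (simp add: n_def card_Diff_subset of_nat_diff card_insert_if)
  have s1: "(\<Sum>k\<in>UNIV. \<bar>T k\<bar> powr p) = \<bar>T i0\<bar> powr p + \<bar>T i1\<bar> powr p + (\<Sum>k\<in>UNIV - {i0,i1}. \<bar>T k\<bar> powr p)"
    using i01 by (intro sum_two) auto
  have "(\<Sum>k\<in>UNIV - {i0,i1}. \<bar>T k\<bar> powr p) = (\<Sum>k\<in>UNIV - {i0,i1}. 1)"
    by (rule sum.cong) (auto simp: Toth)
  then have s2: "(\<Sum>k\<in>UNIV - {i0,i1}. \<bar>T k\<bar> powr p) = n - 2" using card by simp
  have s3: "\<bar>T i1\<bar> powr p > 1" unfolding Ti1 using r1 p by (simp add: gr_one_powr)
  have s4: "\<bar>T i0\<bar> powr p \<ge> 0" by simp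
  have "(\<Sum>k\<in>UNIV. \<bar>T k\<bar> powr p) > n - 1" using s1 s2 s3 s4 by linarith
  then show ?thesis using U W by (auto simp: T_def n_def)
qed


lemma pm_id_mat: "pm id = (mat 1 :: real^'n^'n)"
  by (simp add: vec_eq_iff pm_def mat_def)

lemma lower_all:
  fixes A :: "real^'n^'n"
  assumes p: "p > 1"
  shows "\<exists>B\<in>doubly_stochastic. real CARD('n) - 1 \<le> (\<Sum>k\<in>UNIV. singular_values (A - B) k powr p)"
proof -
  obtain i0 :: 'n where True by simp
  obtain U where U: "orthogonal_matrix U" and col: "column i0 U = ee"
    using orth_complete1[OF norm_ee] by blast
  obtain \<sigma> where \<sigma>: "bij \<sigma>" and t: "tsig A \<sigma> \<le> ssum A / real CARD('n)"
    using avg[of id A] by auto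
  have "real CARD('n) - 1 \<le> \<bar>ssum A / real CARD('n) - 1\<bar> powr p + (real CARD('n) - 1)
      + p * (ssum A / real CARD('n) - tsig A \<sigma>)"
    using t p by (simp add: add_nonneg_nonneg)
  also have "\<dots> \<le> (\<Sum>k\<in>UNIV. singular_values (A - pm \<sigma>) k powr p)"
    by (rule main_ineq(1)[OF p \<sigma> U col])
  finally show ?thesis using pm_ds[OF \<sigma>] by blast
qed

lemma inner_transpose_mv: "x \<bullet> (transpose M *v y) = y \<bullet> ((M::real^'n^'n) *v x)"
  by (simp add: transpose_matrix_vector dot_lmul_matrix[symmetric] inner_commute)

lemma transpose_diff_mat: "transpose ((A::real^'n^'n) - mat 1) = transpose A - mat 1"
  by (simp add: vec_eq_iff transpose_def mat_def)

lemma lower_strict: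
  fixes A :: "real^'n^'n"
  assumes p: "p > 1" and AJ: "A \<noteq> Jmat"
  shows "\<exists>B\<in>doubly_stochastic. real CARD('n) - 1 < (\<Sum>k\<in>UNIV. singular_values (A - B) k powr p)"
proof -
  define a where "a = ssum A / real CARD('n)"
  obtain i0 :: 'n where True by simp
  obtain U where U: "orthogonal_matrix U" and col: "column i0 U = ee"
    using orth_complete1[OF norm_ee] by blast
  show ?thesis
  proof (cases "\<exists>\<sigma>. bij \<sigma> \<and> tsig A \<sigma> \<noteq> a")
    case True
    then obtain \<sigma>0 where "bij \<sigma>0" "tsig A \<sigma>0 \<noteq> a" by blast
    then obtain \<sigma> where \<sigma>: "bij \<sigma>" and t: "tsig A \<sigma> < a"
      using avg[of \<sigma>0 A] by (auto simp: a_def)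
    have "real CARD('n) - 1 < \<bar>a - 1\<bar> powr p + (real CARD('n) - 1) + p * (a - tsig A \<sigma>)"
      using t p by (simp add: add_nonneg_pos)
    also have "\<dots> \<le> (\<Sum>k\<in>UNIV. singular_values (A - pm \<sigma>) k powr p)"
      unfolding a_def by (rule main_ineq(1)[OF p \<sigma> U col])
    finally show ?thesis using pm_ds[OF \<sigma>] by blast
  next
    case False
    then have tall: "\<And>\<sigma>. bij \<sigma> \<Longrightarrow> tsig A \<sigma> = a" by blast
    show ?thesis
    proof (cases "a = 1")
      case False
      have "real CARD('n) - 1 < \<bar>a - 1\<bar> powr p + (real CARD('n) - 1) + p * (a - tsig A id)"
        using False tall[of id] by simp
      also have "\<dots> \<le> (\<Sum>k\<in>UNIV. singular_values (A - pm id) k powr p)"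
        unfolding a_def by (rule main_ineq(1)[OF p _ U col]) simp
      finally show ?thesis using pm_ds[of id] by auto
    next
      case a1: True
      have ss: "ssum A = real CARD('n)" using a1 by (simp add: a_def)
      show ?thesis
      proof (cases "\<exists>\<sigma> u. bij \<sigma> \<and> u \<bullet> ones = 0 \<and> u \<bullet> (A *v (transpose (pm \<sigma>) *v u)) \<noteq> 0")
        case True
        then obtain \<sigma> u where \<sigma>: "bij \<sigma>" and u1: "u \<bullet> ones = 0"
          and uA: "u \<bullet> (A *v (transpose (pm \<sigma>) *v u)) \<noteq> 0" by blast
        have u0: "u \<noteq> 0" using uA by auto
        define g where "g = u /\<^sub>R norm u"
        have ng: "norm g = 1" using u0 by (simp add: g_def)
        have g1: "g \<bullet> ones = 0" using u1 by (simp add: g_def)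
        have gA: "g \<bullet> (A *v (transpose (pm \<sigma>) *v g)) \<noteq> 0"
          using uA u0 by (simp add: g_def mv_scale)
        have gee: "ee \<bullet> g = 0" using g1 orth_ee_ones[of g] by (metis inner_commute)
        obtain i1 where i01: "i1 \<noteq> i0" using exists_other[OF g1] ng by (metis norm_zero zero_neq_one)
        obtain U2 where U2: "orthogonal_matrix U2" and c0: "column i0 U2 = ee" and c1: "column i1 U2 = g"
          using orth_complete2[OF norm_ee ng gee i01[symmetric]] by blast
        have "real CARD('n) - 1 = \<bar>a - 1\<bar> powr p + (real CARD('n) - 1) + p * (a - tsig A \<sigma>)"
          using a1 tall[OF \<sigma>] by simp
        also have "\<dots> < (\<Sum>k\<in>UNIV. singular_values (A - pm \<sigma>) k powr p)"
          unfolding a_def using i01 c1 gA by (intro main_ineq(2)[OF p \<sigma> U2 c0]) auto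
        finally show ?thesis using pm_ds[OF \<sigma>] by blast
      next
        case False
        then have H: "\<And>\<sigma> u. bij \<sigma> \<Longrightarrow> u \<bullet> ones = 0 \<Longrightarrow> u \<bullet> (A *v (transpose (pm \<sigma>) *v u)) = 0"
          by blast
        have q: "g \<bullet> (A *v h) = 0" if "g \<bullet> ones = 0" "h \<bullet> ones = 0" for g h
          using qaq[OF H that] .
        have Bds: "(mat 1 :: real^'n^'n) \<in> doubly_stochastic" using pm_ds[of id] by (simp add: pm_id_mat)
        show ?thesis
        proof (cases "A *v ones = ones")
          case False
          obtain U1 W1 where "orthogonal_matrix U1" "orthogonal_matrix W1"
            and lt: "real CARD('n) - 1 < (\<Sum>k\<in>UNIV. \<bar>(transpose U1 ** (A - mat 1) ** W1) $ k $ k\<bar> powr p)"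
            using case4[OF p ss q False] by blast
          moreover have "(\<Sum>k\<in>UNIV. \<bar>(transpose U1 ** (A - mat 1) ** W1) $ k $ k\<bar> powr p)
              \<le> (\<Sum>k\<in>UNIV. singular_values (A - mat 1) k powr p)"
            using p by (intro lower_C calculation) auto
          ultimately show ?thesis using Bds by force
        next
          case rows: True
          show ?thesis
          proof (cases "transpose A *v ones = ones")
            case True
            then have "A = Jmat" using A_is_J[OF rows _ q] by blast
            then show ?thesis using AJ by simp
          next
            case False
            have ssT: "ssum (transpose A) = real CARD('n)"
              using ss by (simp add: ssum_def transpose_def sum.swap[of "\<lambda>i j. A$j$i"])
            have qT: "g \<bullet> (transpose A *v h) = 0" if "g \<bullet> ones = 0" "h \<bullet> ones = 0" for g h
              unfolding inner_transpose_mv using q[OF that(2,1)] .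
            obtain U1 W1 where U1: "orthogonal_matrix U1" and W1: "orthogonal_matrix W1"
              and lt: "real CARD('n) - 1 < (\<Sum>k\<in>UNIV. \<bar>(transpose U1 ** (transpose A - mat 1) ** W1) $ k $ k\<bar> powr p)"
              using case4[OF p ssT qT False] by blast
            have eq: "(transpose U1 ** (transpose A - mat 1) ** W1) $ k $ k = (transpose W1 ** (A - mat 1) ** U1) $ k $ k" for k
              unfolding tmul_entry transpose_diff_mat[symmetric] inner_transpose_mv ..
            have "(\<Sum>k\<in>UNIV. \<bar>(transpose W1 ** (A - mat 1) ** U1) $ k $ k\<bar> powr p)
              \<le> (\<Sum>k\<in>UNIV. singular_values (A - mat 1) k powr p)"
              using p by (intro lower_C W1 U1) auto
            then show ?thesis using lt Bds unfolding eq by force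
          qed
        qed
      qed
    qed
  qed
qed


lemma sv_nonneg: "singular_values X k \<ge> 0"
  using sv_spec[of X] by blast

lemma sum_sv_nonneg: "0 \<le> (\<Sum>k\<in>UNIV. singular_values X k powr p)"
  by (intro sum_nonneg) simp

lemma sch_bdd:
  fixes A :: "real^'n^'n"
  assumes p: "p > 0"
  shows "bdd_above ((\<lambda>B. schatten_norm p (A - B)) ` doubly_stochastic)"
proof -
  define C where "C = (\<Sum>i\<in>UNIV. \<Sum>j\<in>UNIV. \<bar>A$i$j\<bar> + 1)"
  have "schatten_norm p (A - B) \<le> (real CARD('n) * C powr p) powr (1 / p)" if B: "B \<in> doubly_stochastic" for B
  proof -
    have sk: "singular_values (A - B) k \<le> C" for k
    proof -
      have "singular_values (A - B) k \<le> (\<Sum>i\<in>UNIV. \<Sum>j\<in>UNIV. \<bar>(A - B)$i$j\<bar>)" by (rule sv_bound)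
      also have "\<dots> \<le> C" unfolding C_def
      proof (intro sum_mono)
        fix i j
        have "0 \<le> B$i$j" "B$i$j \<le> 1" using ds_entry_le1[OF B] by auto
        then show "\<bar>(A - B)$i$j\<bar> \<le> \<bar>A$i$j\<bar> + 1" by simp
      qed
      finally show ?thesis .
    qed
    have "(\<Sum>k\<in>UNIV. singular_values (A - B) k powr p) \<le> (\<Sum>k\<in>(UNIV::'n set). C powr p)"
      using sk p by (intro sum_mono powr_mono2) (auto simp: sv_nonneg)
    also have "\<dots> = real CARD('n) * C powr p" by simp
    finally show ?thesis unfolding schatten_norm_def using p
      by (intro powr_mono2) (auto simp: sum_sv_nonneg)
  qed
  then show ?thesis by (intro bdd_aboveI2) blast
qed

lemma sch_upper:
  fixes B :: "real^'n^'n"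
  assumes p: "p > 0" and B: "B \<in> doubly_stochastic"
  shows "schatten_norm p (Jmat - B) \<le> (real CARD('n) - 1) powr (1 / p)"
  unfolding schatten_norm_def using upper_D[OF B p] p
  by (intro powr_mono2) (auto simp: sum_sv_nonneg)

lemma sch_lower:
  fixes A :: "real^'n^'n"
  assumes p: "p > 1"
  shows "\<exists>B\<in>doubly_stochastic. (real CARD('n) - 1) powr (1 / p) \<le> schatten_norm p (A - B)"
proof -
  obtain B where B: "B \<in> doubly_stochastic"
    and le: "real CARD('n) - 1 \<le> (\<Sum>k\<in>UNIV. singular_values (A - B) k powr p)"
    using lower_all[OF p] by blast
  have "(real CARD('n) - 1) powr (1 / p) \<le> schatten_norm p (A - B)"
    unfolding schatten_norm_def using le p by (intro powr_mono2) auto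
  then show ?thesis using B by blast
qed

lemma sch_lower_strict:
  fixes A :: "real^'n^'n"
  assumes p: "p > 1" and AJ: "A \<noteq> Jmat"
  shows "\<exists>B\<in>doubly_stochastic. (real CARD('n) - 1) powr (1 / p) < schatten_norm p (A - B)"
proof -
  obtain B where B: "B \<in> doubly_stochastic"
    and lt: "real CARD('n) - 1 < (\<Sum>k\<in>UNIV. singular_values (A - B) k powr p)"
    using lower_strict[OF p AJ] by blast
  have "(real CARD('n) - 1) powr (1 / p) < schatten_norm p (A - B)"
    unfolding schatten_norm_def using lt p by (intro powr_less_mono2) auto
  then show ?thesis using B by blast
qed

theorem mainTheorem6:
  fixes p :: real
  assumes "1 < p"
  shows "(\<forall>A :: real^'n^'n.
            (SUP B\<in>doubly_stochastic. schatten_norm p ((Jmat :: real^'n^'n) - B))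
              \<le> (SUP B\<in>doubly_stochastic. schatten_norm p (A - B)))
       \<and> (\<forall>A :: real^'n^'n.
            (\<forall>A' :: real^'n^'n.
               (SUP B\<in>doubly_stochastic. schatten_norm p (A - B))
                 \<le> (SUP B\<in>doubly_stochastic. schatten_norm p (A' - B))) \<longrightarrow> A = (Jmat :: real^'n^'n))
       \<and> (INF A :: real^'n^'n. (SUP B\<in>doubly_stochastic. schatten_norm p (A - B)))
            = (real CARD('n) - 1) powr (1 / p)"
proof -
  have p: "p > 1" using assms .
  have p0: "p > 0" using assms by simp
  define R where "R = (real CARD('n) - 1) powr (1 / p)"
  define f where "f A = (SUP B\<in>doubly_stochastic. schatten_norm p (A - B))" for A :: "real^'n^'n"
  have fJ: "f Jmat \<le> R" unfolding f_def R_def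
    using J_ds sch_upper[OF p0] by (intro cSUP_least) auto
  have fge: "R \<le> f A" for A
  proof -
    obtain B where "B \<in> doubly_stochastic" "R \<le> schatten_norm p (A - B)"
      using sch_lower[OF p, of A] unfolding R_def by blast
    then show ?thesis unfolding f_def by (intro cSUP_upper2[OF sch_bdd[OF p0]])
  qed
  have fgt: "R < f A" if AJ: "A \<noteq> Jmat" for A
  proof -
    obtain B where B: "B \<in> doubly_stochastic" and lt: "R < schatten_norm p (A - B)"
      using sch_lower_strict[OF p AJ] unfolding R_def by blast
    have "schatten_norm p (A - B) \<le> f A" unfolding f_def
      using B by (intro cSUP_upper[OF _ sch_bdd[OF p0]])
    then show ?thesis using lt by simp
  qed
  have fJe: "f Jmat = R" using fJ fge[of Jmat] by simp
  have c1: "\<forall>A. f Jmat \<le> f A" using fJe fge by simp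
  have c2: "\<forall>A. (\<forall>A'. f A \<le> f A') \<longrightarrow> A = Jmat"
  proof (intro allI impI)
    fix A assume "\<forall>A'. f A \<le> f A'"
    then have "f A \<le> f Jmat" by blast
    then show "A = Jmat" using fgt[of A] fJe by (cases "A = Jmat") auto
  qed
  have c3: "(INF A. f A) = R"
  proof (rule antisym)
    have "bdd_below (range f)" using fge by (intro bdd_belowI2) blast
    then have "(INF A. f A) \<le> f Jmat" by (rule cINF_lower) simp
    then show "(INF A. f A) \<le> R" using fJe by simp
    show "R \<le> (INF A. f A)" using fge by (intro cINF_greatest) auto
  qed
  show ?thesis using c1 c2 c3 unfolding f_def R_def by blast
qed


end
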